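(* Let $1<p\le2$, $p'=p/(p-1)$, and $p\le b\le p'$. Assume $\sup_{\xi}\|v_\xi\|_{L^\infty(\overline{M})}/\|u_\xi\|_{L^\infty(\overline{M})}<\infty$. Let $\varphi$ be a positive function on $\mathcal{I}$ with $M_\varphi:=\sup_{t>0}t\sum_{\xi:\,t\le\varphi(\xi)}\|u_\xi\|^2_{L^\infty(\overline{M})}<\infty$. Then for every $f\in L^p(\overline{M})$, $$\Big(\sum_{\xi\in\mathcal{I}}\big(|\mathcal{F}_Lf(\xi)|\,\varphi(\xi)^{\frac1b-\frac1{p'}}\big)^b\,\|u_\xi\|_{L^\infty(\overline{M})}^{1-\frac{b}{p'}}\,\|v_\xi\|_{L^\infty(\overline{M})}^{1-\frac{b}{p}}\Big)^{1/b}\lesssim_p M_\varphi^{\frac1b-\frac1{p'}}\|f\|_{L^p(\overline{M})}.$$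
   Context: Standing setup: $\overline{M}$ is a smooth orientable manifold with (possibly empty) boundary and smooth density $dx$. $L$ is a pseudo-differential operator on its interior with boundary conditions giving discrete spectrum $\{\lambda_\xi\}_{\xi\in\mathcal{I}}$, eigenfunctions $u_\xi$ of $L$ and $v_\xi$ of $L^*$ ($L^*v_\xi=\overline{\lambda_\xi}v_\xi$), $\|u_\xi\|_{L^2}=\|v_\xi\|_{L^2}=1$, $(u_\xi,v_\eta)_{L^2}=\delta_{\xi\eta}$, $\{u_\xi\}$ a Riesz basis of $L^2(\overline{M})$, $u_\xi,v_\xi\in L^\infty$. $\mathcal{F}_Lf(\xi):=\int_{\overline{M}}f(x)\overline{v_\xi(x)}\,dx$. *)

theory Defs
  imports "HOL-Probability.Probability"
begin

definition in_Lp :: "'a measure \<Rightarrow> real \<Rightarrow> ('a \<Rightarrow> complex) \<Rightarrow> bool" where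
  "in_Lp M p f \<longleftrightarrow> f \<in> borel_measurable M \<and> integrable M (\<lambda>x. norm (f x) powr p)"

definition Lp_norm :: "'a measure \<Rightarrow> real \<Rightarrow> ('a \<Rightarrow> complex) \<Rightarrow> real" where
  "Lp_norm M p f = (\<integral>x. norm (f x) powr p \<partial>M) powr (1 / p)"

definition in_Linf :: "'a measure \<Rightarrow> ('a \<Rightarrow> complex) \<Rightarrow> bool" where
  "in_Linf M f \<longleftrightarrow> f \<in> borel_measurable M \<and> esssup M (\<lambda>x. ereal (norm (f x))) < \<infinity>"

definition Linf_norm :: "'a measure \<Rightarrow> ('a \<Rightarrow> complex) \<Rightarrow> real" where
  "Linf_norm M f = real_of_ereal (esssup M (\<lambda>x. ereal (norm (f x))))"

definition L2_inner :: "'a measure \<Rightarrow> ('a \<Rightarrow> complex) \<Rightarrow> ('a \<Rightarrow> complex) \<Rightarrow> complex" where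
  "L2_inner M f g = (\<integral>x. f x * cnj (g x) \<partial>M)"

definition riesz_basis :: "'a measure \<Rightarrow> ('i \<Rightarrow> 'a \<Rightarrow> complex) \<Rightarrow> bool" where
  "riesz_basis M u \<longleftrightarrow>
     (\<forall>\<xi>. in_Lp M 2 (u \<xi>)) \<and>
     (\<exists>A B. 0 < A \<and> 0 < B \<and>
        (\<forall>F c. finite F \<longrightarrow>
           A * (\<Sum>\<xi>\<in>F. (cmod (c \<xi>))\<^sup>2) \<le> (Lp_norm M 2 (\<lambda>x. \<Sum>\<xi>\<in>F. c \<xi> * u \<xi> x))\<^sup>2 \<and>
           (Lp_norm M 2 (\<lambda>x. \<Sum>\<xi>\<in>F. c \<xi> * u \<xi> x))\<^sup>2 \<le> B * (\<Sum>\<xi>\<in>F. (cmod (c \<xi>))\<^sup>2))) \<and>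
     (\<forall>f. in_Lp M 2 f \<longrightarrow> (\<forall>\<epsilon>>0. \<exists>F c. finite F \<and>
           Lp_norm M 2 (\<lambda>x. f x - (\<Sum>\<xi>\<in>F. c \<xi> * u \<xi> x)) < \<epsilon>))"

definition FL :: "'a measure \<Rightarrow> ('i \<Rightarrow> 'a \<Rightarrow> complex) \<Rightarrow> ('a \<Rightarrow> complex) \<Rightarrow> 'i \<Rightarrow> complex" where
  "FL M v f \<xi> = (\<integral>x. f x * cnj (v \<xi> x) \<partial>M)"

definition Mphi :: "'a measure \<Rightarrow> ('i \<Rightarrow> 'a \<Rightarrow> complex) \<Rightarrow> ('i \<Rightarrow> real) \<Rightarrow> ennreal" where
  "Mphi M u \<phi> = (SUP t\<in>{0<..}. ennreal t *
      (\<Sum>\<^sub>\<infinity>\<xi>\<in>{\<xi>. t \<le> \<phi> \<xi>}. ennreal ((Linf_norm M (u \<xi>))\<^sup>2)))"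

end

theory Submission
  imports Defs
begin

lemma geo_up:
  fixes r0 y a :: real
  assumes r0: "r0 > 0" and a: "a > 0" and y: "y > 0"
  shows "(1 - 2 powr (-a)) * (\<Sum>j\<le>n. if r0*2^j < y then (r0*2^j) powr a else 0) \<le> y powr a"
proof -
  define d where "d = 1 - 2 powr (-a)"
  have d0: "d \<ge> 0" using a by (simp add: d_def powr_minus_divide ge_one_powr_ge_zero)
  have rel: "\<And>j. (r0*2^(Suc j)) powr a = 2 powr a * (r0*2^j) powr a"
    using r0 by (simp add: powr_mult[symmetric] mult_ac)
  have key: "d * (\<Sum>j\<le>n. if r0*2^j < y then (r0*2^j) powr a else 0) \<le> (min y (r0*2^n)) powr a" for n
  proof (induction n)
    case 0
    then show ?case using r0 y d0 a
      by (auto simp: d_def min_def powr_minus_divide  mult_le_cancel_right1 intro: powr_mono2)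
  next
    case (Suc n)
    show ?case
    proof (cases "r0*2^(Suc n) < y")
      case True
      have "r0*2^n \<le> r0*2^Suc n" using r0 by simp
      then have T2: "r0*2^n < y" using True by linarith
      have "d * (\<Sum>j\<le>Suc n. if r0*2^j < y then (r0*2^j) powr a else 0)
          = d * (\<Sum>j\<le>n. if r0*2^j < y then (r0*2^j) powr a else 0) + d * (r0*2^(Suc n)) powr a"
        using True by (simp add: algebra_simps)
      also have "\<dots> \<le> (r0*2^n) powr a + d * (r0*2^(Suc n)) powr a"
        using Suc T2 by (simp add: min_def)
      also have "\<dots> = (r0*2^(Suc n)) powr a"
        unfolding rel d_def by (simp add: algebra_simps powr_minus_divide)
      also have "\<dots> = (min y (r0*2^(Suc n))) powr a" using True by simp
      finally show ?thesis .
    next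
      case False
      have "d * (\<Sum>j\<le>Suc n. if r0*2^j < y then (r0*2^j) powr a else 0)
          = d * (\<Sum>j\<le>n. if r0*2^j < y then (r0*2^j) powr a else 0)"
        using False by simp
      also have "\<dots> \<le> (min y (r0*2^n)) powr a" by (rule Suc)
      also have "\<dots> \<le> (min y (r0*2^(Suc n))) powr a"
        using r0 y a by (intro powr_mono2) (auto simp: min_def)
      finally show ?thesis .
    qed
  qed
  have "(min y (r0*2^n)) powr a \<le> y powr a" using r0 y a by (intro powr_mono2) auto
  then show ?thesis using key[of n] unfolding d_def by linarith
qed

lemma geo_down:
  fixes r0 y b :: real
  assumes r0: "r0 > 0" and b: "b > 0" and y: "y > 0"
  shows "(1 - 2 powr (-b)) * (\<Sum>j\<le>n. if y \<le> r0*2^j then (r0*2^j) powr (-b) else 0) \<le> y powr (-b)"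
proof -
  define d where "d = 1 - 2 powr (-b)"
  define S where "S n = (\<Sum>j\<le>n. if y \<le> r0*2^j then (r0*2^j) powr (-b) else 0)" for n
  have rel: "\<And>j. (r0*2^(Suc j)) powr (-b) = 2 powr (-b) * (r0*2^j) powr (-b)"
    using r0 by (simp add: powr_mult[symmetric] mult_ac)
  have anti: "\<And>x. y \<le> x \<Longrightarrow> x powr (-b) \<le> y powr (-b)"
    using y b by (intro powr_mono2') auto
  have key: "d * S n + (if y \<le> r0*2^n then (r0*2^(Suc n)) powr (-b) else 0) \<le> y powr (-b)
      \<and> (r0*2^n < y \<longrightarrow> S n = 0)" for n
  proof (induction n)
    case 0
    have "d * r0 powr (-b) + 2 powr (-b) * r0 powr (-b) = r0 powr (-b)"
      by (simp add: d_def algebra_simps)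
    then show ?case using anti[of r0] rel[of 0]
      by (auto simp: S_def)
  next
    case (Suc n)
    show ?case
    proof (cases "y \<le> r0*2^(Suc n)")
      case True
      have eq: "d * (r0*2^Suc n) powr (-b) + (r0*2^Suc (Suc n)) powr (-b) = (r0*2^Suc n) powr (-b)"
        unfolding rel[of "Suc n"] by (simp add: d_def algebra_simps)
      have SS: "S (Suc n) = S n + (r0*2^Suc n) powr (-b)" using True by (simp add: S_def)
      show ?thesis
      proof (cases "y \<le> r0*2^n")
        case True2: True
        have "d * S (Suc n) + (r0*2^Suc (Suc n)) powr (-b)
            = d * S n + (r0*2^Suc n) powr (-b)" using SS eq by (simp add: algebra_simps)
        then show ?thesis using Suc True True2 by auto
      next
        case False2: False
        then have "S n = 0" using Suc by auto
        then have "d * S (Suc n) + (r0*2^Suc (Suc n)) powr (-b) = (r0*2^Suc n) powr (-b)"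
          using SS eq by simp
        then show ?thesis using True anti[of "r0*2^Suc n"] by auto
      qed
    next
      case False
      have "r0*2^n \<le> r0*2^Suc n" using r0 by simp
      then have F2: "r0*2^n < y" using False by linarith
      then have "S n = 0" using Suc by auto
      then have "S (Suc n) = 0" using False by (simp add: S_def)
      then show ?thesis using False y b by auto
    qed
  qed
  have "0 \<le> (if y \<le> r0*2^n then (r0*2^(Suc n)) powr (-b) else 0)" by simp
  then show ?thesis using key[of n] unfolding d_def S_def by linarith
qed

lemma dyadic_ex:
  fixes x :: real assumes "x \<ge> 1"
  shows "\<exists>j::nat. 2^j \<le> x \<and> x < 2^(Suc j)"
proof -
  obtain n where n: "x < 2^n" using real_arch_pow[of 2 x] by auto
  define j where "j = (LEAST j. x < 2^(Suc j))"
  have ex: "x < 2^(Suc n)" proof -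
    have "(2::real)^n \<le> 2^(Suc n)" by simp
    then show ?thesis using n by linarith
  qed
  have j1: "x < 2^(Suc j)" unfolding j_def by (rule LeastI[of _ n]) (rule ex)
  have j2: "2^j \<le> x"
  proof (cases j)
    case 0 then show ?thesis using assms by simp
  next
    case (Suc k)
    have "\<not> x < 2^(Suc k)" using not_less_Least[of k "\<lambda>j. x < 2^(Suc j)"] Suc j_def by auto
    then show ?thesis using Suc by simp
  qed
  show ?thesis using j1 j2 by blast
qed

lemma half_sum: "(\<Sum>j\<le>m. (1/2::real)^(Suc j)) = 1 - (1/2)^(Suc m)"
  by (induction m) auto

lemma small_phi:
  fixes \<phi> a :: "'i \<Rightarrow> real" and N \<sigma> :: real
  assumes F: "finite F" and pos: "\<And>\<xi>. \<xi> \<in> F \<Longrightarrow> \<phi> \<xi> > 0"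
    and N: "\<And>t. t > 0 \<Longrightarrow> t * (\<Sum>\<xi>\<in>{\<xi>\<in>F. t \<le> \<phi> \<xi>}. (a \<xi>)^2) \<le> N"
    and \<sigma>: "\<sigma> > 0"
  shows "(\<Sum>\<xi>\<in>{\<xi>\<in>F. \<phi> \<xi> \<le> \<sigma>}. (\<phi> \<xi>)^2 * (a \<xi>)^2) \<le> 4 * N * \<sigma>"
proof -
  define S where "S = {\<xi>\<in>F. \<phi> \<xi> \<le> \<sigma>}"
  have S: "finite S" "S \<subseteq> F" using F by (auto simp: S_def)
  define t where "t j = \<sigma> / 2^(Suc j)" for j :: nat
  have tpos: "t j > 0" for j using \<sigma> by (simp add: t_def)
  have exj: "\<exists>j. t j < \<phi> \<xi> \<and> \<phi> \<xi> \<le> 2 * t j" if "\<xi> \<in> S" for \<xi>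
  proof -
    have p: "\<phi> \<xi> > 0" "\<phi> \<xi> \<le> \<sigma>" using that pos by (auto simp: S_def)
    then have "\<sigma> / \<phi> \<xi> \<ge> 1" by simp
    then obtain j::nat where j: "2^j \<le> \<sigma> / \<phi> \<xi>" "\<sigma> / \<phi> \<xi> < 2^(Suc j)" using dyadic_ex by blast
    have "t j < \<phi> \<xi>" using j(2) p by (simp add: t_def field_simps)
    moreover have "\<phi> \<xi> \<le> 2 * t j" using j(1) p by (simp add: t_def field_simps)
    ultimately show ?thesis by blast
  qed
  then obtain jj where jj: "\<And>\<xi>. \<xi> \<in> S \<Longrightarrow> t (jj \<xi>) < \<phi> \<xi> \<and> \<phi> \<xi> \<le> 2 * t (jj \<xi>)" by metis
  obtain n where n: "\<And>\<xi>. \<xi> \<in> S \<Longrightarrow> jj \<xi> \<le> n"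
    using S(1) finite_nat_set_iff_bounded_le[of "jj ` S"] by auto
  have pt: "(\<phi> \<xi>)^2 * (a \<xi>)^2 \<le> (\<Sum>j\<le>n. if t j \<le> \<phi> \<xi> then 4 * (t j)^2 * (a \<xi>)^2 else 0)"
    if "\<xi> \<in> S" for \<xi>
  proof -
    have "(\<phi> \<xi>)^2 \<le> (2 * t (jj \<xi>))^2" using jj[OF that] pos that S(2)
      by (intro power_mono) auto
    then have "(\<phi> \<xi>)^2 * (a \<xi>)^2 \<le> 4 * (t (jj \<xi>))^2 * (a \<xi>)^2"
      by (intro mult_right_mono) (auto simp: power_mult_distrib)
    also have "\<dots> = (if t (jj \<xi>) \<le> \<phi> \<xi> then 4 * (t (jj \<xi>))^2 * (a \<xi>)^2 else 0)"
      using jj[OF that] by simp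
    also have "\<dots> \<le> (\<Sum>j\<le>n. if t j \<le> \<phi> \<xi> then 4 * (t j)^2 * (a \<xi>)^2 else 0)"
      by (rule member_le_sum) (use n[OF that] in auto)
    finally show ?thesis .
  qed
  have tsum: "(\<Sum>j\<le>n. t j) \<le> \<sigma>"
  proof -
    have "(\<Sum>j\<le>n. t j) = \<sigma> * (\<Sum>j\<le>n. (1/2)^(Suc j))"
    proof -
      have "t j = \<sigma> * (1/2)^(Suc j)" for j unfolding t_def by (simp add: power_one_over)
      then have "(\<Sum>j\<le>n. t j) = (\<Sum>j\<le>n. \<sigma> * (1/2)^(Suc j))" by (intro sum.cong) auto
      then show ?thesis by (simp only: sum_distrib_left)
    qed
    also have "(\<Sum>j\<le>n. (1/2::real)^(Suc j)) = 1 - (1/2)^(Suc n)"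
      by (rule half_sum)
    finally show ?thesis using \<sigma> by (simp add: mult_le_cancel_left1)
  qed
  have "0 \<le> \<sigma> * (\<Sum>\<xi>\<in>{\<xi>\<in>F. \<sigma> \<le> \<phi> \<xi>}. (a \<xi>)^2)"
    using \<sigma> by (intro mult_nonneg_nonneg sum_nonneg) auto
  then have "0 \<le> N" using N[of "\<sigma>"] \<sigma> by linarith
  then have N4: "4 * N * (\<Sum>j\<le>n. t j) \<le> 4 * N * \<sigma>"
    using tsum by (intro mult_left_mono) auto
  have "(\<Sum>\<xi>\<in>S. (\<phi> \<xi>)^2 * (a \<xi>)^2) \<le> (\<Sum>\<xi>\<in>S. \<Sum>j\<le>n. if t j \<le> \<phi> \<xi> then 4 * (t j)^2 * (a \<xi>)^2 else 0)"
    by (rule sum_mono) (rule pt)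
  also have "\<dots> = (\<Sum>j\<le>n. \<Sum>\<xi>\<in>S. if t j \<le> \<phi> \<xi> then 4 * (t j)^2 * (a \<xi>)^2 else 0)"
    by (rule sum.swap)
  also have "\<dots> \<le> (\<Sum>j\<le>n. 4 * N * t j)"
  proof (rule sum_mono)
    fix j assume "j \<in> {..n}"
    have "(\<Sum>\<xi>\<in>S. if t j \<le> \<phi> \<xi> then 4 * (t j)^2 * (a \<xi>)^2 else 0)
        = 4 * (t j)^2 * (\<Sum>\<xi>\<in>{\<xi>\<in>S. t j \<le> \<phi> \<xi>}. (a \<xi>)^2)"
      using S(1) by (simp add: sum.inter_filter sum_distrib_left, intro sum.cong) auto
    also have "\<dots> \<le> 4 * (t j)^2 * (\<Sum>\<xi>\<in>{\<xi>\<in>F. t j \<le> \<phi> \<xi>}. (a \<xi>)^2)"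
      using F S(2) by (intro mult_left_mono sum_mono2) auto
    also have "\<dots> = 4 * t j * (t j * (\<Sum>\<xi>\<in>{\<xi>\<in>F. t j \<le> \<phi> \<xi>}. (a \<xi>)^2))"
      by (simp add: power2_eq_square)
    also have "\<dots> \<le> 4 * t j * N"
      using N[OF tpos[of j]] tpos[of j] by (intro mult_left_mono) auto
    finally show "(\<Sum>\<xi>\<in>S. if t j \<le> \<phi> \<xi> then 4 * (t j)^2 * (a \<xi>)^2 else 0) \<le> 4 * N * t j"
      by (simp add: mult_ac)
  qed
  also have "\<dots> = 4 * N * (\<Sum>j\<le>n. t j)" by (simp add: sum_distrib_left)
  also have "\<dots> \<le> 4 * N * \<sigma>" by (rule N4)
  finally show ?thesis unfolding S_def .
qed

lemma pw1:
  fixes r0 c x p N :: real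
  assumes r0: "r0 > 0" and c: "c > 0" and x: "x \<ge> 0" and p: "1 < p" and N: "N \<ge> 0"
  shows "(\<Sum>j\<le>n. (2*(r0*2^j)) powr p * (8*N / (r0*2^j)) * (if c*(r0*2^j) < x then x else 0))
    \<le> 2 powr p * 8 * N * c powr (1-p) / (1 - 2 powr (1-p)) * x powr p"
proof (cases "x = 0")
  case True
  have "\<And>j. c*(r0*2^j) > 0" using r0 c by simp
  then show ?thesis unfolding True by (simp add: not_less power_zero_numeral)
next
  case False
  then have xp: "x > 0" using x by simp
  define y where "y = x / c"
  have yp: "y > 0" using xp c by (simp add: y_def)
  define d where "d = 1 - 2 powr (1-p)"
  have dp: "d > 0" unfolding d_def using p by (simp add: powr_less_one)
  have trm: "(2*(r0*2^j)) powr p * (8*N / (r0*2^j)) * (if c*(r0*2^j) < x then x else 0)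
      = 2 powr p * 8 * N * x * (if r0*2^j < y then (r0*2^j) powr (p-1) else 0)" for j
  proof -
    have rp: "r0*2^j > 0" using r0 by simp
    have e1: "(2*(r0*2^j)) powr p * (8*N / (r0*2^j)) = 2 powr p * 8 * N * (r0*2^j) powr (p-1)"
      using rp by (simp add: powr_mult powr_diff field_simps)
    have e2: "(c*(r0*2^j) < x) = (r0*2^j < y)" using c by (simp add: y_def field_simps)
    show ?thesis using e1 e2 by (simp add: mult_ac)
  qed
  have "(\<Sum>j\<le>n. (2*(r0*2^j)) powr p * (8*N / (r0*2^j)) * (if c*(r0*2^j) < x then x else 0))
      = 2 powr p * 8 * N * x * (\<Sum>j\<le>n. if r0*2^j < y then (r0*2^j) powr (p-1) else 0)"
    by (simp only: trm sum_distrib_left)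
  also have "(\<Sum>j\<le>n. if r0*2^j < y then (r0*2^j) powr (p-1) else 0) \<le> y powr (p-1) / d"
    using geo_up[OF r0 _ yp, of "p-1" n] p dp by (simp add: d_def field_simps)
  then have "2 powr p * 8 * N * x * (\<Sum>j\<le>n. if r0*2^j < y then (r0*2^j) powr (p-1) else 0)
      \<le> 2 powr p * 8 * N * x * (y powr (p-1) / d)"
    using N xp by (intro mult_left_mono) auto
  also have "x * y powr (p-1) = c powr (1-p) * x powr p"
    using xp c by (simp add: y_def powr_divide powr_diff powr_minus_divide field_simps)
  then have "2 powr p * 8 * N * x * (y powr (p-1) / d) = 2 powr p * 8 * N * c powr (1-p) / d * x powr p"
    by (simp add: field_simps)
  finally show ?thesis unfolding d_def .
qed

lemma pw2:
  fixes r0 c x p B :: real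
  assumes r0: "r0 > 0" and c: "c > 0" and x: "x \<ge> 0" and p: "p < 2" and B: "B \<ge> 0"
  shows "(\<Sum>j\<le>n. (2*(r0*2^j)) powr p * (4*B / (r0*2^j)^2) * (if x \<le> c*(r0*2^j) then x^2 else 0))
    \<le> 2 powr p * 4 * B * c powr (2-p) / (1 - 2 powr (p-2)) * x powr p"
proof (cases "x = 0")
  case True
  have "\<And>j. (if x \<le> c*(r0*2^j) then x^2 else 0) = (0::real)" using True by simp
  then show ?thesis using True by simp
next
  case False
  then have xp: "x > 0" using x by simp
  define y where "y = x / c"
  have yp: "y > 0" using xp c by (simp add: y_def)
  define d where "d = 1 - 2 powr (p-2)"
  have dp: "d > 0" unfolding d_def using p by (simp add: powr_less_one)
  have trm: "(2*(r0*2^j)) powr p * (4*B / (r0*2^j)^2) * (if x \<le> c*(r0*2^j) then x^2 else 0)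
      = 2 powr p * 4 * B * x^2 * (if y \<le> r0*2^j then (r0*2^j) powr (-(2-p)) else 0)" for j
  proof -
    have rp: "r0*2^j > 0" using r0 by simp
    have e1: "(2*(r0*2^j)) powr p * (4*B / (r0*2^j)^2) = 2 powr p * 4 * B * (r0*2^j) powr (-(2-p))"
    proof -
      have "(r0*2^j)^2 = (r0*2^j) powr 2" using rp by simp
      then show ?thesis using rp by (simp add: powr_mult powr_diff powr_minus_divide field_simps)
    qed
    have e2: "(x \<le> c*(r0*2^j)) = (y \<le> r0*2^j)" using c by (simp add: y_def field_simps)
    show ?thesis using e1 e2 by (simp add: mult_ac)
  qed
  have "(\<Sum>j\<le>n. (2*(r0*2^j)) powr p * (4*B / (r0*2^j)^2) * (if x \<le> c*(r0*2^j) then x^2 else 0))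
      = 2 powr p * 4 * B * x^2 * (\<Sum>j\<le>n. if y \<le> r0*2^j then (r0*2^j) powr (-(2-p)) else 0)"
    by (simp only: trm sum_distrib_left)
  also have "(\<Sum>j\<le>n. if y \<le> r0*2^j then (r0*2^j) powr (-(2-p)) else 0) \<le> y powr (-(2-p)) / d"
    using geo_down[OF r0 _ yp, of "2-p" n] p dp by (simp add: d_def field_simps)
  then have "2 powr p * 4 * B * x^2 * (\<Sum>j\<le>n. if y \<le> r0*2^j then (r0*2^j) powr (-(2-p)) else 0)
      \<le> 2 powr p * 4 * B * x^2 * (y powr (-(2-p)) / d)"
    using B xp by (intro mult_left_mono) auto
  also have "x^2 * y powr (-(2-p)) = c powr (2-p) * x powr p"
  proof -
    have "x^2 = x powr 2" using xp by simp
    then show ?thesis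
      using xp c by (simp add: y_def powr_divide powr_diff powr_minus_divide powr_add[symmetric] field_simps)
  qed
  then have "2 powr p * 4 * B * x^2 * (y powr (-(2-p)) / d) = 2 powr p * 4 * B * c powr (2-p) / d * x powr p"
    by (simp add: field_simps)
  finally show ?thesis unfolding d_def .
qed

definition L1 :: "'a measure \<Rightarrow> ('a \<Rightarrow> complex) \<Rightarrow> bool" where
  "L1 M g \<longleftrightarrow> g \<in> borel_measurable M \<and> integrable M (\<lambda>x. norm (g x))"
definition L2 :: "'a measure \<Rightarrow> ('a \<Rightarrow> complex) \<Rightarrow> bool" where
  "L2 M g \<longleftrightarrow> g \<in> borel_measurable M \<and> integrable M (\<lambda>x. (norm (g x))^2)"

lemma meas_cnj[measurable]: "h \<in> borel_measurable M \<Longrightarrow> (\<lambda>x. cnj (h x)) \<in> borel_measurable M"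
  by (rule borel_measurable_continuous_on) (auto intro: continuous_intros)

lemma meas_prod_cnj: "g \<in> borel_measurable M \<Longrightarrow> h \<in> borel_measurable M \<Longrightarrow> (\<lambda>x. g x * cnj (h x)) \<in> borel_measurable M"
  by (intro borel_measurable_times meas_cnj)

lemma in_Lp_2: "in_Lp M 2 g \<longleftrightarrow> L2 M g"
  by (simp add: in_Lp_def L2_def)

lemma Lp_norm_2_sq: "(Lp_norm M 2 g)^2 = (\<integral>x. (norm (g x))^2 \<partial>M)"
proof -
  have "(\<integral>x. norm (g x) powr 2 \<partial>M) = (\<integral>x. (norm (g x))^2 \<partial>M)" by simp
  moreover have "0 \<le> (\<integral>x. (norm (g x))^2 \<partial>M)" by simp
  ultimately show ?thesis unfolding Lp_norm_def by (simp add: powr_half_sqrt)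
qed

lemma sq_split:
  fixes a b d :: real assumes "d > 0"
  shows "(a+b)^2 \<le> (1+d)*a^2 + (1+1/d)*b^2"
proof -
  have "0 \<le> (d*a - b)^2 / d" using assms by simp
  also have "(d*a - b)^2 / d = (1+d)*a^2 + (1+1/d)*b^2 - (a+b)^2"
    using assms by (simp add: field_simps power2_eq_square)
  finally show ?thesis by simp
qed

lemma norm_sq_split:
  fixes x y :: complex assumes "d > 0"
  shows "(norm (x+y))^2 \<le> (1+d)*(norm x)^2 + (1+1/d)*(norm y)^2"
proof -
  have "(norm (x+y))^2 \<le> (norm x + norm y)^2" by (intro power_mono norm_triangle_ineq) auto
  also have "\<dots> \<le> (1+d)*(norm x)^2 + (1+1/d)*(norm y)^2" by (rule sq_split[OF assms])
  finally show ?thesis .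
qed

lemma L2_add: "L2 M g \<Longrightarrow> L2 M h \<Longrightarrow> L2 M (\<lambda>x. g x + h x)"
  unfolding L2_def
proof (intro conjI)
  assume a: "g \<in> borel_measurable M \<and> integrable M (\<lambda>x. (cmod (g x))\<^sup>2)"
     "h \<in> borel_measurable M \<and> integrable M (\<lambda>x. (cmod (h x))\<^sup>2)"
  then show m: "(\<lambda>x. g x + h x) \<in> borel_measurable M" by auto
  show "integrable M (\<lambda>x. (cmod (g x + h x))\<^sup>2)"
  proof (rule Bochner_Integration.integrable_bound[where f="\<lambda>x. 2*(cmod (g x))^2 + 2*(cmod (h x))^2"])
    show "integrable M (\<lambda>x. 2*(cmod (g x))^2 + 2*(cmod (h x))^2)" using a by auto
    show "(\<lambda>x. (cmod (g x + h x))\<^sup>2) \<in> borel_measurable M" using m by measurable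
    show "AE x in M. norm ((cmod (g x + h x))\<^sup>2) \<le> norm (2*(cmod (g x))^2 + 2*(cmod (h x))^2)"
    proof (intro AE_I2)
      fix x
      have "(cmod (g x + h x))\<^sup>2 \<le> (1+1)*(cmod (g x))^2 + (1+1/1)*(cmod (h x))^2"
        by (rule norm_sq_split) simp
      then show "norm ((cmod (g x + h x))\<^sup>2) \<le> norm (2*(cmod (g x))^2 + 2*(cmod (h x))^2)"
        by simp
    qed
  qed
qed

lemma L2_scale: "L2 M g \<Longrightarrow> L2 M (\<lambda>x. c * g x)"
  unfolding L2_def by (auto simp: norm_mult power_mult_distrib)

lemma L2_diff: "L2 M g \<Longrightarrow> L2 M h \<Longrightarrow> L2 M (\<lambda>x. g x - h x)"
  using L2_add[of M g "\<lambda>x. (-1) * h x"] L2_scale[of M h "-1"] by simp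

lemma L2_sum: "finite G \<Longrightarrow> (\<And>\<eta>. \<eta> \<in> G \<Longrightarrow> L2 M (f \<eta>)) \<Longrightarrow> L2 M (\<lambda>x. \<Sum>\<eta>\<in>G. f \<eta> x)"
proof (induction G rule: finite_induct)
  case empty then show ?case by (simp add: L2_def)
next
  case (insert a G)
  then show ?case using L2_add[of M "f a" "\<lambda>x. \<Sum>\<eta>\<in>G. f \<eta> x"] by simp
qed

lemma L2_prod_int: "L2 M g \<Longrightarrow> L2 M h \<Longrightarrow> integrable M (\<lambda>x. g x * cnj (h x))"
  unfolding L2_def
proof -
  assume a: "g \<in> borel_measurable M \<and> integrable M (\<lambda>x. (cmod (g x))\<^sup>2)"
     "h \<in> borel_measurable M \<and> integrable M (\<lambda>x. (cmod (h x))\<^sup>2)"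
  show "integrable M (\<lambda>x. g x * cnj (h x))"
  proof (rule Bochner_Integration.integrable_bound[where f="\<lambda>x. (cmod (g x))^2 + (cmod (h x))^2"])
    show "integrable M (\<lambda>x. (cmod (g x))^2 + (cmod (h x))^2)" using a by auto
    show "(\<lambda>x. g x * cnj (h x)) \<in> borel_measurable M" using a by (intro meas_prod_cnj) auto
    show "AE x in M. norm (g x * cnj (h x)) \<le> norm ((cmod (g x))^2 + (cmod (h x))^2)"
    proof (intro AE_I2)
      fix x
      have "2 * (cmod (g x) * cmod (h x)) \<le> (cmod (g x))^2 + (cmod (h x))^2"
        using sum_squares_bound[of "cmod (g x)" "cmod (h x)"] by (simp add: power2_eq_square)
      moreover have "0 \<le> cmod (g x) * cmod (h x)" by simp
      moreover have "norm (g x * cnj (h x)) = cmod (g x) * cmod (h x)" by (simp add: norm_mult)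
      moreover have "norm ((cmod (g x))^2 + (cmod (h x))^2) = (cmod (g x))^2 + (cmod (h x))^2" by simp
      ultimately show "norm (g x * cnj (h x)) \<le> norm ((cmod (g x))^2 + (cmod (h x))^2)"
        by linarith
    qed
  qed
qed

lemma L2_inner_bound:
  assumes g: "L2 M g" and h: "L2 M h" and e: "e > 0"
  shows "norm (\<integral>x. g x * cnj (h x) \<partial>M) \<le> ((\<integral>x. (norm (g x))^2 \<partial>M) / e + e * (\<integral>x. (norm (h x))^2 \<partial>M)) / 2"
proof -
  have ig: "integrable M (\<lambda>x. (norm (g x))^2)" "integrable M (\<lambda>x. (norm (h x))^2)"
    using g h by (auto simp: L2_def)
  have "norm (\<integral>x. g x * cnj (h x) \<partial>M) \<le> (\<integral>x. norm (g x * cnj (h x)) \<partial>M)"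
    by (rule integral_norm_bound)
  also have "\<dots> \<le> (\<integral>x. ((norm (g x))^2 / e + e * (norm (h x))^2) / 2 \<partial>M)"
  proof (rule integral_mono')
    show "integrable M (\<lambda>x. ((norm (g x))^2 / e + e * (norm (h x))^2) / 2)" using ig by auto
    fix x
    have "0 \<le> (norm (g x) - e * norm (h x))^2 / e" using e by simp
    also have "(norm (g x) - e * norm (h x))^2 / e = (norm (g x))^2 / e + e * (norm (h x))^2 - 2 * (norm (g x) * norm (h x))"
      using e by (simp add: field_simps power2_eq_square)
    finally show "norm (g x * cnj (h x)) \<le> ((norm (g x))^2 / e + e * (norm (h x))^2) / 2"
      by (simp add: norm_mult)
    show "0 \<le> ((norm (g x))^2 / e + e * (norm (h x))^2) / 2" using e by simp
  qed
  also have "\<dots> = ((\<integral>x. (norm (g x))^2 \<partial>M) / e + e * (\<integral>x. (norm (h x))^2 \<partial>M)) / 2"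
    using ig by simp
  finally show ?thesis .
qed

lemma Linf_AE:
  assumes "in_Linf M f" shows "AE x in M. norm (f x) \<le> Linf_norm M f"
proof -
  have fin: "esssup M (\<lambda>x. ereal (norm (f x))) < \<infinity>" using assms by (simp add: in_Linf_def)
  show ?thesis
    using esssup_AE[of "\<lambda>x. ereal (norm (f x))" M]
  proof (rule AE_mp, intro AE_I2 impI)
    fix x assume le: "ereal (norm (f x)) \<le> esssup M (\<lambda>x. ereal (norm (f x)))"
    show "norm (f x) \<le> Linf_norm M f" unfolding Linf_norm_def
      using le fin by (cases "esssup M (\<lambda>x. ereal (norm (f x)))") auto
  qed
qed

lemma L1_prod:
  assumes g: "L1 M g" and v: "v \<in> borel_measurable M" and K: "K \<ge> 0"
    and vb: "AE x in M. norm (v x) \<le> K"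
  shows "integrable M (\<lambda>x. g x * cnj (v x))"
    "norm (\<integral>x. g x * cnj (v x) \<partial>M) \<le> K * (\<integral>x. norm (g x) \<partial>M)"
proof -
  have ig: "integrable M (\<lambda>x. norm (g x))" "g \<in> borel_measurable M" using g by (auto simp: L1_def)
  have ae: "AE x in M. norm (g x * cnj (v x)) \<le> K * norm (g x)"
    using vb by eventually_elim (simp add: norm_mult, metis mult.commute mult_left_mono norm_ge_zero)
  show int: "integrable M (\<lambda>x. g x * cnj (v x))"
  proof (rule Bochner_Integration.integrable_bound[where f="\<lambda>x. K * norm (g x)"])
    show "integrable M (\<lambda>x. K * norm (g x))" using ig by auto
    show "(\<lambda>x. g x * cnj (v x)) \<in> borel_measurable M" using ig v by (intro meas_prod_cnj) auto
    show "AE x in M. norm (g x * cnj (v x)) \<le> norm (K * norm (g x))"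
      using ae by eventually_elim (use K in auto)
  qed
  have "norm (\<integral>x. g x * cnj (v x) \<partial>M) \<le> (\<integral>x. norm (g x * cnj (v x)) \<partial>M)"
    by (rule integral_norm_bound)
  also have "\<dots> \<le> (\<integral>x. K * norm (g x) \<partial>M)"
    using int ig ae by (intro integral_mono_AE) auto
  also have "\<dots> = K * (\<integral>x. norm (g x) \<partial>M)" by simp
  finally show "norm (\<integral>x. g x * cnj (v x) \<partial>M) \<le> K * (\<integral>x. norm (g x) \<partial>M)" .
qed

lemma Linf_pos:
  assumes "in_Linf M f" "L2 M f" "Lp_norm M 2 f = 1"
  shows "Linf_norm M f > 0"
proof (rule ccontr)
  assume "\<not> Linf_norm M f > 0"
  then have L0: "Linf_norm M f \<le> 0" by simp
  have "AE x in M. norm (f x) \<le> 0" using Linf_AE[OF assms(1)]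
    by eventually_elim (use L0 in linarith)
  then have "AE x in M. (norm (f x))^2 = 0" by eventually_elim auto
  then have "(\<integral>x. (norm (f x))^2 \<partial>M) = 0" by (rule integral_eq_zero_AE)
  then have "(Lp_norm M 2 f)^2 = 0" by (simp add: Lp_norm_2_sq)
  then show False using assms(3) by simp
qed

definition CP :: "real \<Rightarrow> real" where
  "CP p = 2 powr p * (8 / (1 - 2 powr (1-p)) + 4 / (1 - 2 powr (p-2)))"

lemma CP_pos: "1 < p \<Longrightarrow> p < 2 \<Longrightarrow> CP p > 0"
  unfolding CP_def by (intro mult_pos_pos add_pos_pos divide_pos_pos) (auto simp: powr_less_one)

lemma const_eq1:
  fixes N B p :: real assumes N: "N > 0" and B: "B > 0"
  shows "N * (N / B) powr (1-p) = N powr (2-p) * B powr (p-1)"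
proof -
  have e: "B powr (p-1) * B powr (1-p) = 1" using B by (simp add: powr_add[symmetric])
  have n: "N powr (2-p) = N * N powr (1-p)" using N powr_add[of N 1 "1-p"] by simp
  have d: "(N / B) powr (1-p) = N powr (1-p) / B powr (1-p)" using N B by (simp add: powr_divide)
  have bq: "B powr (1-p) > 0" using B by simp
  show ?thesis unfolding n d using e bq by (simp add: field_simps)
qed

lemma const_eq2:
  fixes N B p :: real assumes N: "N > 0" and B: "B > 0"
  shows "B * (N / B) powr (2-p) = N powr (2-p) * B powr (p-1)"
proof -
  have e: "B powr (p-1) * B powr (2-p) = B" using B powr_add[of B "p-1" "2-p"] by simp
  have d: "(N / B) powr (2-p) = N powr (2-p) / B powr (2-p)" using N B by (simp add: powr_divide)
  have bq: "B powr (2-p) > 0" using B by simp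
  show ?thesis unfolding d using e bq by (simp add: field_simps)
qed

lemma cut1:
  fixes f :: "'a \<Rightarrow> complex"
  assumes fm: "f \<in> borel_measurable M" and fi: "integrable M (\<lambda>x. norm (f x) powr p)"
    and p: "1 < p" and s: "s > 0"
  shows "L1 M (\<lambda>x. if s < norm (f x) then f x else 0)"
  unfolding L1_def
proof
  show m: "(\<lambda>x. if s < norm (f x) then f x else 0) \<in> borel_measurable M" using fm by measurable
  show "integrable M (\<lambda>x. norm (if s < norm (f x) then f x else 0))"
  proof (rule Bochner_Integration.integrable_bound[where f="\<lambda>x. s powr (1-p) * norm (f x) powr p"])
    show "integrable M (\<lambda>x. s powr (1-p) * norm (f x) powr p)" using fi by simp
    show "(\<lambda>x. norm (if s < norm (f x) then f x else 0)) \<in> borel_measurable M" using m by measurable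
    show "AE x in M. norm (norm (if s < norm (f x) then f x else 0)) \<le> norm (s powr (1-p) * norm (f x) powr p)"
    proof (intro AE_I2)
      fix x
      show "norm (norm (if s < norm (f x) then f x else 0)) \<le> norm (s powr (1-p) * norm (f x) powr p)"
      proof (cases "s < norm (f x)")
        case True
        have "norm (f x) = norm (f x) powr (1-p) * norm (f x) powr p"
          using True s by (simp add: powr_add[symmetric])
        also have "\<dots> \<le> s powr (1-p) * norm (f x) powr p"
          using True s p by (intro mult_right_mono powr_mono2') auto
        finally show ?thesis using True by simp
      qed simp
    qed
  qed
qed

lemma cut2:
  fixes f :: "'a \<Rightarrow> complex"
  assumes fm: "f \<in> borel_measurable M" and fi: "integrable M (\<lambda>x. norm (f x) powr p)"
    and p: "p < 2" and s: "s > 0"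
  shows "L2 M (\<lambda>x. if s < norm (f x) then 0 else f x)"
  unfolding L2_def
proof
  show m: "(\<lambda>x. if s < norm (f x) then 0 else f x) \<in> borel_measurable M" using fm by measurable
  show "integrable M (\<lambda>x. (norm (if s < norm (f x) then 0 else f x))^2)"
  proof (rule Bochner_Integration.integrable_bound[where f="\<lambda>x. s powr (2-p) * norm (f x) powr p"])
    show "integrable M (\<lambda>x. s powr (2-p) * norm (f x) powr p)" using fi by simp
    show "(\<lambda>x. (norm (if s < norm (f x) then 0 else f x))^2) \<in> borel_measurable M" using m by measurable
    show "AE x in M. norm ((norm (if s < norm (f x) then 0 else f x))^2) \<le> norm (s powr (2-p) * norm (f x) powr p)"
    proof (intro AE_I2)
      fix x
      show "norm ((norm (if s < norm (f x) then 0 else f x))^2) \<le> norm (s powr (2-p) * norm (f x) powr p)"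
      proof (cases "s < norm (f x) \<or> f x = 0")
        case False
        then have fx: "norm (f x) > 0" "norm (f x) \<le> s" by auto
        have "(norm (f x))^2 = norm (f x) powr (2-p) * norm (f x) powr p"
          using fx by (simp add: powr_add[symmetric])
        also have "\<dots> \<le> s powr (2-p) * norm (f x) powr p"
          using fx p by (intro mult_right_mono powr_mono2) auto
        finally show ?thesis using False by simp
      qed auto
    qed
  qed
qed

lemma level_bound:
  fixes M :: "'a measure" and T :: "('a \<Rightarrow> complex) \<Rightarrow> 'i \<Rightarrow> complex"
  assumes F: "finite F" and \<phi>pos: "\<And>\<xi>. \<xi> \<in> F \<Longrightarrow> \<phi> \<xi> > 0" and apos: "\<And>\<xi>. \<xi> \<in> F \<Longrightarrow> a \<xi> > 0"
    and N: "\<And>t. t > 0 \<Longrightarrow> t * (\<Sum>\<xi>\<in>{\<xi>\<in>F. t \<le> \<phi> \<xi>}. (a \<xi>)^2) \<le> N"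
    and T1: "\<And>\<xi>. \<xi> \<in> F \<Longrightarrow> norm (T g \<xi>) \<le> a \<xi> * (\<integral>x. norm (g x) \<partial>M)"
    and T2: "(\<Sum>\<xi>\<in>F. (norm (T h \<xi>))^2) \<le> B * (\<integral>x. (norm (h x))^2 \<partial>M)"
    and B: "B \<ge> 0" and r: "r > 0"
    and L: "L \<subseteq> F" and Lp: "\<And>\<xi>. \<xi> \<in> L \<Longrightarrow> r * (\<phi> \<xi> * a \<xi>) \<le> norm (T g \<xi>) + norm (T h \<xi>)"
  shows "(\<Sum>\<xi>\<in>L. (\<phi> \<xi> * a \<xi>)^2) \<le> 8 * N / r * (\<integral>x. norm (g x) \<partial>M) + 4 * B / r^2 * (\<integral>x. (norm (h x))^2 \<partial>M)"
proof -
  define I1 where "I1 = (\<integral>x. norm (g x) \<partial>M)"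
  have I1: "I1 \<ge> 0" unfolding I1_def by simp
  define As where "As = {\<xi>\<in>F. \<phi> \<xi> \<le> 2 * I1 / r}"
  define Bs where "Bs = {\<xi>\<in>F. r * (\<phi> \<xi> * a \<xi>) \<le> 2 * norm (T h \<xi>)}"
  have sub: "L \<subseteq> As \<union> Bs"
  proof
    fix \<xi> assume x: "\<xi> \<in> L"
    then have xF: "\<xi> \<in> F" using L by auto
    show "\<xi> \<in> As \<union> Bs"
    proof (cases "r * (\<phi> \<xi> * a \<xi>) \<le> 2 * norm (T h \<xi>)")
      case True then show ?thesis using xF by (auto simp: Bs_def)
    next
      case False
      then have "r * (\<phi> \<xi> * a \<xi>) \<le> 2 * norm (T g \<xi>)" using Lp[OF x] by linarith
      also have "\<dots> \<le> 2 * (a \<xi> * I1)" using T1[OF xF] by (simp add: I1_def)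
      finally have "a \<xi> * (r * \<phi> \<xi>) \<le> a \<xi> * (2 * I1)" by (simp add: mult_ac)
      then have "r * \<phi> \<xi> \<le> 2 * I1" using apos[OF xF] by simp
      then have "\<phi> \<xi> \<le> 2 * I1 / r" using r by (simp add: field_simps)
      then show ?thesis using xF by (auto simp: As_def)
    qed
  qed
  have fin: "finite As" "finite Bs" using F by (auto simp: As_def Bs_def)
  have "(\<Sum>\<xi>\<in>L. (\<phi> \<xi> * a \<xi>)^2) \<le> (\<Sum>\<xi>\<in>As \<union> Bs. (\<phi> \<xi> * a \<xi>)^2)"
    using sub fin by (intro sum_mono2) auto
  also have "\<dots> \<le> (\<Sum>\<xi>\<in>As. (\<phi> \<xi> * a \<xi>)^2) + (\<Sum>\<xi>\<in>Bs. (\<phi> \<xi> * a \<xi>)^2)"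
  proof -
    have "0 \<le> (\<Sum>\<xi>\<in>As \<inter> Bs. (\<phi> \<xi> * a \<xi>)^2)" by (intro sum_nonneg) auto
    then show ?thesis using sum_Un[OF fin, of "\<lambda>\<xi>. (\<phi> \<xi> * a \<xi>)^2"] by linarith
  qed
  also have "(\<Sum>\<xi>\<in>As. (\<phi> \<xi> * a \<xi>)^2) \<le> 8 * N / r * I1"
  proof (cases "I1 = 0")
    case True
    then have "As = {}" using \<phi>pos by (force simp: As_def)
    then show ?thesis using True by simp
  next
    case False
    then have s: "2 * I1 / r > 0" using I1 r by simp
    have "(\<Sum>\<xi>\<in>As. (\<phi> \<xi> * a \<xi>)^2) = (\<Sum>\<xi>\<in>{\<xi>\<in>F. \<phi> \<xi> \<le> 2 * I1 / r}. (\<phi> \<xi>)^2 * (a \<xi>)^2)"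
      by (simp add: As_def power_mult_distrib)
    also have "\<dots> \<le> 4 * N * (2 * I1 / r)" by (rule small_phi[OF F \<phi>pos N s]) auto
    also have "\<dots> = 8 * N / r * I1" by simp
    finally show ?thesis .
  qed
  also have "(\<Sum>\<xi>\<in>Bs. (\<phi> \<xi> * a \<xi>)^2) \<le> 4 * B / r^2 * (\<integral>x. (norm (h x))^2 \<partial>M)"
  proof -
    have "(\<Sum>\<xi>\<in>Bs. (\<phi> \<xi> * a \<xi>)^2) \<le> (\<Sum>\<xi>\<in>Bs. 4 / r^2 * (norm (T h \<xi>))^2)"
    proof (rule sum_mono)
      fix \<xi> assume "\<xi> \<in> Bs"
      then have le: "r * (\<phi> \<xi> * a \<xi>) \<le> 2 * norm (T h \<xi>)" and xF: "\<xi> \<in> F" by (auto simp: Bs_def)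
      have "0 \<le> r * (\<phi> \<xi> * a \<xi>)" using r \<phi>pos[OF xF] apos[OF xF] by simp
      then have "(r * (\<phi> \<xi> * a \<xi>))^2 \<le> (2 * norm (T h \<xi>))^2" using le by (rule power_mono[rotated])
      then show "(\<phi> \<xi> * a \<xi>)^2 \<le> 4 / r^2 * (norm (T h \<xi>))^2"
        using r by (simp add: field_simps power_mult_distrib)
    qed
    also have "\<dots> \<le> (\<Sum>\<xi>\<in>F. 4 / r^2 * (norm (T h \<xi>))^2)"
      using F by (intro sum_mono2) (auto simp: Bs_def)
    also have "\<dots> = 4 / r^2 * (\<Sum>\<xi>\<in>F. (norm (T h \<xi>))^2)" by (simp add: sum_distrib_left)
    also have "\<dots> \<le> 4 / r^2 * (B * (\<integral>x. (norm (h x))^2 \<partial>M))"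
      using T2 r by (intro mult_left_mono) auto
    finally show ?thesis by simp
  qed
  finally show ?thesis unfolding I1_def by simp
qed

lemma pw_id:
  fixes y w p :: real assumes "y \<ge> 0" "w > 0"
  shows "y powr p * w powr (2-p) = (y / w) powr p * w^2"
proof -
  have "w^2 = w powr p * w powr (2-p)" using assms by (simp add: powr_add[symmetric])
  then show ?thesis using assms by (simp add: powr_divide field_simps)
qed

lemma paley_core:
  fixes M :: "'a measure" and T :: "('a \<Rightarrow> complex) \<Rightarrow> 'i \<Rightarrow> complex" and F :: "'i set"
    and \<phi> a :: "'i \<Rightarrow> real" and p B N :: real and f :: "'a \<Rightarrow> complex"
  assumes F: "finite F" and \<phi>pos: "\<And>\<xi>. \<xi> \<in> F \<Longrightarrow> \<phi> \<xi> > 0" and apos: "\<And>\<xi>. \<xi> \<in> F \<Longrightarrow> a \<xi> > 0"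
    and p: "1 < p" "p < 2" and B: "B > 0" and Npos: "N > 0"
    and N: "\<And>t. t > 0 \<Longrightarrow> t * (\<Sum>\<xi>\<in>{\<xi>\<in>F. t \<le> \<phi> \<xi>}. (a \<xi>)^2) \<le> N"
    and Tadd: "\<And>g h \<xi>. L1 M g \<Longrightarrow> L2 M h \<Longrightarrow> \<xi> \<in> F \<Longrightarrow> T (\<lambda>x. g x + h x) \<xi> = T g \<xi> + T h \<xi>"
    and T1: "\<And>g \<xi>. L1 M g \<Longrightarrow> \<xi> \<in> F \<Longrightarrow> norm (T g \<xi>) \<le> a \<xi> * (\<integral>x. norm (g x) \<partial>M)"
    and T2: "\<And>h. L2 M h \<Longrightarrow> (\<Sum>\<xi>\<in>F. (norm (T h \<xi>))^2) \<le> B * (\<integral>x. (norm (h x))^2 \<partial>M)"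
    and fm: "f \<in> borel_measurable M" and fi: "integrable M (\<lambda>x. norm (f x) powr p)"
  shows "(\<Sum>\<xi>\<in>F. norm (T f \<xi>) powr p * (\<phi> \<xi> * a \<xi>) powr (2-p))
    \<le> CP p * B powr (p-1) * N powr (2-p) * (\<integral>x. norm (f x) powr p \<partial>M)"
proof -
  define c where "c = N / B"
  have c: "c > 0" using Npos B by (simp add: c_def)
  define g where "g s x = (if s < norm (f x) then f x else 0)" for s x
  define h where "h s x = (if s < norm (f x) then 0 else f x)" for s x
  have gL1: "L1 M (g s)" if "s > 0" for s unfolding g_def by (rule cut1[OF fm fi p(1) that])
  have hL2: "L2 M (h s)" if "s > 0" for s unfolding h_def by (rule cut2[OF fm fi p(2) that])
  have fsplit: "f = (\<lambda>x. g s x + h s x)" for s by (auto simp: g_def h_def)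
  define w where "w \<xi> = \<phi> \<xi> * a \<xi>" for \<xi>
  have wpos: "w \<xi> > 0" if "\<xi> \<in> F" for \<xi> using \<phi>pos[OF that] apos[OF that] by (simp add: w_def)
  define lam where "lam \<xi> = norm (T f \<xi>) / w \<xi>" for \<xi>
  define F' where "F' = {\<xi>\<in>F. T f \<xi> \<noteq> 0}"
  have F': "finite F'" "F' \<subseteq> F" using F by (auto simp: F'_def)
  define RHS where "RHS = CP p * B powr (p-1) * N powr (2-p) * (\<integral>x. norm (f x) powr p \<partial>M)"
  have RHS0: "RHS \<ge> 0" unfolding RHS_def using CP_pos[OF p] by simp
  have LHS_eq: "(\<Sum>\<xi>\<in>F. norm (T f \<xi>) powr p * (\<phi> \<xi> * a \<xi>) powr (2-p)) = (\<Sum>\<xi>\<in>F'. (lam \<xi>) powr p * (w \<xi>)^2)"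
  proof -
    have "(\<Sum>\<xi>\<in>F. norm (T f \<xi>) powr p * (\<phi> \<xi> * a \<xi>) powr (2-p)) = (\<Sum>\<xi>\<in>F'. norm (T f \<xi>) powr p * (\<phi> \<xi> * a \<xi>) powr (2-p))"
      using F F' by (intro sum.mono_neutral_right) (auto simp: F'_def)
    also have "\<dots> = (\<Sum>\<xi>\<in>F'. (lam \<xi>) powr p * (w \<xi>)^2)"
      using F' wpos by (intro sum.cong refl) (auto simp: lam_def w_def intro!: pw_id)
    finally show ?thesis .
  qed
  show ?thesis
  proof (cases "F' = {}")
    case True
    then show ?thesis using LHS_eq RHS0 unfolding RHS_def by simp
  next
    case False
    have lampos: "lam \<xi> > 0" if "\<xi> \<in> F'" for \<xi> using that wpos F' by (auto simp: lam_def F'_def)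
    define r0 where "r0 = Min (lam ` F')"
    have r0: "r0 > 0" using F' False lampos by (auto simp: r0_def)
    have r0le: "r0 \<le> lam \<xi>" if "\<xi> \<in> F'" for \<xi> using F' that by (auto simp: r0_def)
    have exj: "\<exists>j. r0 * 2^j \<le> lam \<xi> \<and> lam \<xi> < 2 * (r0 * 2^j)" if "\<xi> \<in> F'" for \<xi>
    proof -
      have "lam \<xi> / r0 \<ge> 1" using r0le[OF that] r0 by simp
      then obtain j :: nat where j: "2^j \<le> lam \<xi> / r0" "lam \<xi> / r0 < 2^(Suc j)" using dyadic_ex by blast
      have "r0 * 2^j \<le> lam \<xi>" using j(1) r0 by (simp add: field_simps)
      moreover have "lam \<xi> < 2 * (r0 * 2^j)" using j(2) r0 by (simp add: field_simps)
      ultimately show ?thesis by blast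
    qed
    then obtain jj where jj: "\<And>\<xi>. \<xi> \<in> F' \<Longrightarrow> r0 * 2^(jj \<xi>) \<le> lam \<xi> \<and> lam \<xi> < 2 * (r0 * 2^(jj \<xi>))"
      by metis
    obtain n where n: "\<And>\<xi>. \<xi> \<in> F' \<Longrightarrow> jj \<xi> \<le> n"
      using F'(1) finite_nat_set_iff_bounded_le[of "jj ` F'"] by auto
    define L where "L j = {\<xi>\<in>F'. jj \<xi> = j}" for j
    define I1 where "I1 j = (\<integral>x. norm (g (c * (r0*2^j)) x) \<partial>M)" for j
    define I2 where "I2 j = (\<integral>x. (norm (h (c * (r0*2^j)) x))^2 \<partial>M)" for j
    have step1: "(\<Sum>\<xi>\<in>F'. (lam \<xi>) powr p * (w \<xi>)^2) \<le> (\<Sum>j\<le>n. (2*(r0*2^j)) powr p * (\<Sum>\<xi>\<in>L j. (w \<xi>)^2))"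
    proof -
      have "(\<Sum>\<xi>\<in>F'. (lam \<xi>) powr p * (w \<xi>)^2)
          \<le> (\<Sum>\<xi>\<in>F'. \<Sum>j\<le>n. if jj \<xi> = j then (2*(r0*2^j)) powr p * (w \<xi>)^2 else 0)"
      proof (rule sum_mono)
        fix \<xi> assume x: "\<xi> \<in> F'"
        have "(lam \<xi>) powr p * (w \<xi>)^2 \<le> (2*(r0*2^(jj \<xi>))) powr p * (w \<xi>)^2"
          using jj[OF x] lampos[OF x] p by (intro mult_right_mono powr_mono2) auto
        also have "\<dots> = (\<Sum>j\<le>n. if jj \<xi> = j then (2*(r0*2^j)) powr p * (w \<xi>)^2 else 0)"
          using n[OF x] by (simp add: sum.delta)
        finally show "(lam \<xi>) powr p * (w \<xi>)^2 \<le> (\<Sum>j\<le>n. if jj \<xi> = j then (2*(r0*2^j)) powr p * (w \<xi>)^2 else 0)" .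
      qed
      also have "\<dots> = (\<Sum>j\<le>n. \<Sum>\<xi>\<in>F'. if jj \<xi> = j then (2*(r0*2^j)) powr p * (w \<xi>)^2 else 0)"
        by (rule sum.swap)
      also have "\<dots> = (\<Sum>j\<le>n. (2*(r0*2^j)) powr p * (\<Sum>\<xi>\<in>L j. (w \<xi>)^2))"
      proof (rule sum.cong[OF refl])
        fix j
        have "(\<Sum>\<xi>\<in>F'. if jj \<xi> = j then (2*(r0*2^j)) powr p * (w \<xi>)^2 else 0)
            = (\<Sum>\<xi>\<in>F'. (2*(r0*2^j)) powr p * (if jj \<xi> = j then (w \<xi>)^2 else 0))"
          by (intro sum.cong) auto
        also have "\<dots> = (2*(r0*2^j)) powr p * (\<Sum>\<xi>\<in>L j. (w \<xi>)^2)"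
          using F'(1) by (simp add: L_def sum.inter_filter sum_distrib_left)
        finally show "(\<Sum>\<xi>\<in>F'. if jj \<xi> = j then (2*(r0*2^j)) powr p * (w \<xi>)^2 else 0)
            = (2*(r0*2^j)) powr p * (\<Sum>\<xi>\<in>L j. (w \<xi>)^2)" .
      qed
      finally show ?thesis .
    qed
    have lev: "(\<Sum>\<xi>\<in>L j. (w \<xi>)^2) \<le> 8 * N / (r0*2^j) * I1 j + 4 * B / (r0*2^j)^2 * I2 j" for j
    proof -
      define s where "s = c * (r0*2^j)"
      have s: "s > 0" using c r0 by (simp add: s_def)
      show ?thesis unfolding I1_def I2_def s_def[symmetric] w_def
      proof (rule level_bound[OF F \<phi>pos apos N _ _ _ _ _ ])
        show "\<And>\<xi>. \<xi> \<in> F \<Longrightarrow> norm (T (g s) \<xi>) \<le> a \<xi> * (\<integral>x. norm (g s x) \<partial>M)"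
          using T1 gL1[OF s] by blast
        show "(\<Sum>\<xi>\<in>F. (norm (T (h s) \<xi>))^2) \<le> B * (\<integral>x. (norm (h s x))^2 \<partial>M)"
          using T2 hL2[OF s] by blast
        show "B \<ge> 0" using B by simp
        show "r0 * 2^j > 0" using r0 by simp
        show "L j \<subseteq> F" using F' by (auto simp: L_def)
        fix \<xi> assume x: "\<xi> \<in> L j"
        then have xF': "\<xi> \<in> F'" and xj: "jj \<xi> = j" by (auto simp: L_def)
        have xF: "\<xi> \<in> F" using xF' F' by auto
        have "(r0 * 2^j) * w \<xi> \<le> lam \<xi> * w \<xi>"
          using jj[OF xF'] xj wpos[OF xF] by (intro mult_right_mono) auto
        also have "\<dots> = norm (T f \<xi>)" using wpos[OF xF] by (simp add: lam_def)
        also have "\<dots> = norm (T (g s) \<xi> + T (h s) \<xi>)"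
          using Tadd[OF gL1[OF s] hL2[OF s] xF] fsplit[of s] by metis
        also have "\<dots> \<le> norm (T (g s) \<xi>) + norm (T (h s) \<xi>)" by (rule norm_triangle_ineq)
        finally show "r0 * 2^j * (\<phi> \<xi> * a \<xi>) \<le> norm (T (g s) \<xi>) + norm (T (h s) \<xi>)"
          by (simp add: w_def)
      qed
    qed
    have step2: "(\<Sum>j\<le>n. (2*(r0*2^j)) powr p * (\<Sum>\<xi>\<in>L j. (w \<xi>)^2))
        \<le> (\<Sum>j\<le>n. (2*(r0*2^j)) powr p * (8 * N / (r0*2^j) * I1 j + 4 * B / (r0*2^j)^2 * I2 j))"
      using lev by (intro sum_mono mult_left_mono) auto
    define q where "q j x = (2*(r0*2^j)) powr p * (8 * N / (r0*2^j)) * norm (g (c * (r0*2^j)) x)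
        + (2*(r0*2^j)) powr p * (4 * B / (r0*2^j)^2) * (norm (h (c * (r0*2^j)) x))^2" for j x
    have qint: "integrable M (q j)" for j
    proof -
      have s: "c * (r0*2^j) > 0" using c r0 by simp
      show ?thesis unfolding q_def using gL1[OF s] hL2[OF s] by (auto simp: L1_def L2_def)
    qed
    have step3: "(\<Sum>j\<le>n. (2*(r0*2^j)) powr p * (8 * N / (r0*2^j) * I1 j + 4 * B / (r0*2^j)^2 * I2 j))
        = (\<integral>x. (\<Sum>j\<le>n. q j x) \<partial>M)"
    proof -
      have "(\<integral>x. (\<Sum>j\<le>n. q j x) \<partial>M) = (\<Sum>j\<le>n. \<integral>x. q j x \<partial>M)"
        using qint by (simp add: integral_sum)
      also have "\<dots> = (\<Sum>j\<le>n. (2*(r0*2^j)) powr p * (8 * N / (r0*2^j) * I1 j + 4 * B / (r0*2^j)^2 * I2 j))"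
      proof (rule sum.cong[OF refl])
        fix j
        have s: "c * (r0*2^j) > 0" using c r0 by simp
        have i1: "integrable M (\<lambda>x. norm (g (c * (r0*2^j)) x))" using gL1[OF s] by (simp add: L1_def)
        have i2: "integrable M (\<lambda>x. (norm (h (c * (r0*2^j)) x))^2)" using hL2[OF s] by (simp add: L2_def)
        show "(\<integral>x. q j x \<partial>M) = (2*(r0*2^j)) powr p * (8 * N / (r0*2^j) * I1 j + 4 * B / (r0*2^j)^2 * I2 j)"
          unfolding q_def I1_def I2_def using i1 i2 by (simp add: algebra_simps)
      qed
      finally show ?thesis by simp
    qed
    define K1 where "K1 = 2 powr p * 8 * N * c powr (1-p) / (1 - 2 powr (1-p))"
    define K2 where "K2 = 2 powr p * 4 * B * c powr (2-p) / (1 - 2 powr (p-2))"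
    have step4: "(\<integral>x. (\<Sum>j\<le>n. q j x) \<partial>M) \<le> (\<integral>x. (K1 + K2) * norm (f x) powr p \<partial>M)"
    proof (rule integral_mono')
      show "integrable M (\<lambda>x. (K1 + K2) * norm (f x) powr p)" using fi by simp
      fix x
      have d1: "1 - 2 powr (1-p) > 0" "1 - 2 powr (p-2) > 0" using p by (auto simp: powr_less_one)
      show "0 \<le> (K1 + K2) * norm (f x) powr p"
        unfolding K1_def K2_def using d1 Npos B c by simp
      have e1: "norm (g (c * (r0*2^j)) x) = (if c*(r0*2^j) < norm (f x) then norm (f x) else 0)" for j
        by (simp add: g_def)
      have e2: "(norm (h (c * (r0*2^j)) x))^2 = (if norm (f x) \<le> c*(r0*2^j) then (norm (f x))^2 else 0)" for j
        by (simp add: h_def not_less)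
      have "(\<Sum>j\<le>n. q j x) = (\<Sum>j\<le>n. (2*(r0*2^j)) powr p * (8*N / (r0*2^j)) * (if c*(r0*2^j) < norm (f x) then norm (f x) else 0))
          + (\<Sum>j\<le>n. (2*(r0*2^j)) powr p * (4*B / (r0*2^j)^2) * (if norm (f x) \<le> c*(r0*2^j) then (norm (f x))^2 else 0))"
        unfolding q_def e1 e2 by (simp add: sum.distrib)
      also have "\<dots> \<le> K1 * norm (f x) powr p + K2 * norm (f x) powr p"
        unfolding K1_def K2_def
        by (intro add_mono pw1[OF r0 c _ p(1)] pw2[OF r0 c _ p(2)]) (use Npos B in auto)
      finally show "(\<Sum>j\<le>n. q j x) \<le> (K1 + K2) * norm (f x) powr p" by (simp add: algebra_simps)
    qed
    have K: "K1 + K2 = CP p * B powr (p-1) * N powr (2-p)"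
    proof -
      have "K1 = 2 powr p * 8 * (N * c powr (1-p)) / (1 - 2 powr (1-p))" by (simp add: K1_def)
      also have "N * c powr (1-p) = N powr (2-p) * B powr (p-1)" unfolding c_def by (rule const_eq1[OF Npos B])
      finally have k1: "K1 = 2 powr p * 8 * (N powr (2-p) * B powr (p-1)) / (1 - 2 powr (1-p))" .
      have "K2 = 2 powr p * 4 * (B * c powr (2-p)) / (1 - 2 powr (p-2))" by (simp add: K2_def)
      also have "B * c powr (2-p) = N powr (2-p) * B powr (p-1)" unfolding c_def by (rule const_eq2[OF Npos B])
      finally have k2: "K2 = 2 powr p * 4 * (N powr (2-p) * B powr (p-1)) / (1 - 2 powr (p-2))" .
      show ?thesis unfolding k1 k2 CP_def by (simp add: algebra_simps add_divide_distrib)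
    qed
    have "(\<Sum>\<xi>\<in>F. norm (T f \<xi>) powr p * (\<phi> \<xi> * a \<xi>) powr (2-p)) \<le> (\<integral>x. (K1 + K2) * norm (f x) powr p \<partial>M)"
      using LHS_eq step1 step2 step3 step4 by linarith
    also have "\<dots> = RHS" unfolding RHS_def K by simp
    finally show ?thesis unfolding RHS_def .
  qed
qed

lemma hy_core:
  fixes M :: "'a measure" and T :: "('a \<Rightarrow> complex) \<Rightarrow> 'i \<Rightarrow> complex" and F :: "'i set"
    and a :: "'i \<Rightarrow> real" and p B :: real and f :: "'a \<Rightarrow> complex"
  assumes F: "finite F" and apos: "\<And>\<xi>. \<xi> \<in> F \<Longrightarrow> a \<xi> > 0"
    and p: "1 < p" "p < 2" and B: "B > 0"
    and Tadd: "\<And>g h \<xi>. L1 M g \<Longrightarrow> L2 M h \<Longrightarrow> \<xi> \<in> F \<Longrightarrow> T (\<lambda>x. g x + h x) \<xi> = T g \<xi> + T h \<xi>"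
    and T1: "\<And>g \<xi>. L1 M g \<Longrightarrow> \<xi> \<in> F \<Longrightarrow> norm (T g \<xi>) \<le> a \<xi> * (\<integral>x. norm (g x) \<partial>M)"
    and T2: "\<And>h. L2 M h \<Longrightarrow> (\<Sum>\<xi>\<in>F. (norm (T h \<xi>))^2) \<le> B * (\<integral>x. (norm (h x))^2 \<partial>M)"
    and fm: "f \<in> borel_measurable M" and fi: "integrable M (\<lambda>x. norm (f x) powr p)"
  shows "(\<Sum>\<xi>\<in>F. norm (T f \<xi>) powr (p/(p-1)) * a \<xi> powr (2 - p/(p-1)))
    \<le> (CP p * B powr (p-1) * (\<integral>x. norm (f x) powr p \<partial>M)) powr (1/(p-1))"
proof -
  define q where "q = p/(p-1)"
  have qp: "p + q * (2-p) = q" using p by (simp add: q_def field_simps)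
  have q0: "q > 0" using p by (simp add: q_def)
  define F' where "F' = {\<xi>\<in>F. T f \<xi> \<noteq> 0}"
  have F': "finite F'" "F' \<subseteq> F" using F by (auto simp: F'_def)
  define z where "z \<xi> = norm (T f \<xi>) / a \<xi>" for \<xi>
  have zpos: "z \<xi> > 0" if "\<xi> \<in> F'" for \<xi> using that apos F' by (auto simp: z_def F'_def)
  define S where "S = (\<Sum>\<xi>\<in>F'. z \<xi> powr q * (a \<xi>)^2)"
  have LHS: "(\<Sum>\<xi>\<in>F. norm (T f \<xi>) powr q * a \<xi> powr (2 - q)) = S"
  proof -
    have "(\<Sum>\<xi>\<in>F. norm (T f \<xi>) powr q * a \<xi> powr (2 - q)) = (\<Sum>\<xi>\<in>F'. norm (T f \<xi>) powr q * a \<xi> powr (2 - q))"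
      using F F' by (intro sum.mono_neutral_right) (auto simp: F'_def)
    also have "\<dots> = S" unfolding S_def z_def
      using F' apos by (intro sum.cong refl pw_id) auto
    finally show ?thesis .
  qed
  define I where "I = (\<integral>x. norm (f x) powr p \<partial>M)"
  have I0: "I \<ge> 0" by (simp add: I_def)
  show ?thesis
  proof (cases "F' = {}")
    case True
    then have "S = 0" by (simp add: S_def)
    then show ?thesis using LHS unfolding q_def by simp
  next
    case False
    then obtain \<xi>0 where x0: "\<xi>0 \<in> F'" by auto
    have Spos: "S > 0" unfolding S_def
    proof (rule sum_pos2[OF F'(1) x0])
      show "0 < z \<xi>0 powr q * (a \<xi>0)^2" using zpos[OF x0] apos[of \<xi>0] x0 F' by auto
      show "\<And>i. i \<in> F' \<Longrightarrow> 0 \<le> z i powr q * (a i)^2" by simp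
    qed
    define \<psi> where "\<psi> \<xi> = z \<xi> powr q" for \<xi>
    have \<psi>pos: "\<psi> \<xi> > 0" if "\<xi> \<in> F'" for \<xi> using zpos[OF that] by (simp add: \<psi>_def)
    have Ncond: "t * (\<Sum>\<xi>\<in>{\<xi>\<in>F'. t \<le> \<psi> \<xi>}. (a \<xi>)^2) \<le> S" if t: "t > 0" for t
    proof -
      have "t * (\<Sum>\<xi>\<in>{\<xi>\<in>F'. t \<le> \<psi> \<xi>}. (a \<xi>)^2) = (\<Sum>\<xi>\<in>{\<xi>\<in>F'. t \<le> \<psi> \<xi>}. t * (a \<xi>)^2)"
        by (simp add: sum_distrib_left)
      also have "\<dots> \<le> (\<Sum>\<xi>\<in>{\<xi>\<in>F'. t \<le> \<psi> \<xi>}. \<psi> \<xi> * (a \<xi>)^2)"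
        by (intro sum_mono mult_right_mono) auto
      also have "\<dots> \<le> (\<Sum>\<xi>\<in>F'. \<psi> \<xi> * (a \<xi>)^2)"
      proof (rule sum_mono2[OF F'(1)])
        fix b assume "b \<in> F' - {\<xi>\<in>F'. t \<le> \<psi> \<xi>}"
        then have "\<psi> b > 0" using \<psi>pos by auto
        then show "0 \<le> \<psi> b * (a b)^2" by simp
      qed auto
      finally show ?thesis by (simp add: S_def \<psi>_def)
    qed
    have pc: "(\<Sum>\<xi>\<in>F'. norm (T f \<xi>) powr p * (\<psi> \<xi> * a \<xi>) powr (2-p))
        \<le> CP p * B powr (p-1) * S powr (2-p) * I"
      unfolding I_def
    proof (rule paley_core[OF F'(1) \<psi>pos _ p B Spos Ncond _ _ _ fm fi])
      show "\<And>\<xi>. \<xi> \<in> F' \<Longrightarrow> a \<xi> > 0" using apos F' by auto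
      show "\<And>g h \<xi>. L1 M g \<Longrightarrow> L2 M h \<Longrightarrow> \<xi> \<in> F' \<Longrightarrow> T (\<lambda>x. g x + h x) \<xi> = T g \<xi> + T h \<xi>"
        using Tadd F' by auto
      show "\<And>g \<xi>. L1 M g \<Longrightarrow> \<xi> \<in> F' \<Longrightarrow> norm (T g \<xi>) \<le> a \<xi> * (\<integral>x. norm (g x) \<partial>M)"
        using T1 F' by auto
      fix h assume h: "L2 M h"
      have "(\<Sum>\<xi>\<in>F'. (norm (T h \<xi>))^2) \<le> (\<Sum>\<xi>\<in>F. (norm (T h \<xi>))^2)"
        using F F' by (intro sum_mono2) auto
      also have "\<dots> \<le> B * (\<integral>x. (norm (h x))^2 \<partial>M)" by (rule T2[OF h])
      finally show "(\<Sum>\<xi>\<in>F'. (norm (T h \<xi>))^2) \<le> B * (\<integral>x. (norm (h x))^2 \<partial>M)" .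
    qed
    have eqS: "(\<Sum>\<xi>\<in>F'. norm (T f \<xi>) powr p * (\<psi> \<xi> * a \<xi>) powr (2-p)) = S"
      unfolding S_def
    proof (rule sum.cong[OF refl])
      fix \<xi> assume x: "\<xi> \<in> F'"
      have ap: "a \<xi> > 0" using apos x F' by auto
      have zp: "z \<xi> > 0" by (rule zpos[OF x])
      have nT: "norm (T f \<xi>) = z \<xi> * a \<xi>" using ap by (simp add: z_def)
      have "norm (T f \<xi>) powr p * (\<psi> \<xi> * a \<xi>) powr (2-p)
          = z \<xi> powr p * a \<xi> powr p * (z \<xi> powr (q * (2-p)) * a \<xi> powr (2-p))"
        unfolding nT \<psi>_def using ap zp by (simp add: powr_mult powr_powr)
      also have "\<dots> = (z \<xi> powr p * z \<xi> powr (q * (2-p))) * (a \<xi> powr p * a \<xi> powr (2-p))"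
        by (simp add: mult_ac)
      also have "z \<xi> powr p * z \<xi> powr (q * (2-p)) = z \<xi> powr q"
        using powr_add[symmetric, of "z \<xi>" p "q * (2-p)"] unfolding qp .
      also have "a \<xi> powr p * a \<xi> powr (2-p) = (a \<xi>)^2"
        using ap by (simp add: powr_add[symmetric])
      finally show "norm (T f \<xi>) powr p * (\<psi> \<xi> * a \<xi>) powr (2-p) = z \<xi> powr q * (a \<xi>)^2" .
    qed
    have "S \<le> CP p * B powr (p-1) * S powr (2-p) * I" using pc eqS by simp
    moreover have "S = S powr (p-1) * S powr (2-p)" using Spos by (simp add: powr_add[symmetric])
    ultimately have "S powr (p-1) * S powr (2-p) \<le> (CP p * B powr (p-1) * I) * S powr (2-p)"
      by (simp add: mult_ac)
    then have "S powr (p-1) \<le> CP p * B powr (p-1) * I" using Spos by simp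
    then have "(S powr (p-1)) powr (1/(p-1)) \<le> (CP p * B powr (p-1) * I) powr (1/(p-1))"
      using p by (intro powr_mono2) auto
    also have "(S powr (p-1)) powr (1/(p-1)) = S" using p Spos by (simp add: powr_powr)
    finally show ?thesis using LHS unfolding q_def I_def by simp
  qed
qed

lemma holder_sum:
  fixes x y :: "'i \<Rightarrow> real" and t :: real
  assumes F: "finite F" and t: "0 < t" "t < 1"
    and x: "\<And>i. i \<in> F \<Longrightarrow> x i \<ge> 0" and y: "\<And>i. i \<in> F \<Longrightarrow> y i \<ge> 0"
  shows "(\<Sum>i\<in>F. x i powr t * y i powr (1-t)) \<le> (\<Sum>i\<in>F. x i) powr t * (\<Sum>i\<in>F. y i) powr (1-t)"
proof -
  define X where "X = (\<Sum>i\<in>F. x i)"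
  define Y where "Y = (\<Sum>i\<in>F. y i)"
  have X0: "X \<ge> 0" "Y \<ge> 0" using x y by (auto simp: X_def Y_def intro: sum_nonneg)
  show ?thesis
  proof (cases "X = 0 \<or> Y = 0")
    case True
    then have "(\<forall>i\<in>F. x i = 0) \<or> (\<forall>i\<in>F. y i = 0)"
      using F x y by (auto simp: X_def Y_def sum_nonneg_eq_0_iff)
    then have "(\<Sum>i\<in>F. x i powr t * y i powr (1-t)) = 0" using t by auto
    then show ?thesis using X0 unfolding X_def[symmetric] Y_def[symmetric] by simp
  next
    case False
    then have Xp: "X > 0" "Y > 0" using X0 by auto
    have "(\<Sum>i\<in>F. x i powr t * y i powr (1-t)) \<le> (\<Sum>i\<in>F. X powr t * Y powr (1-t) * (t * (x i / X) + (1-t) * (y i / Y)))"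
    proof (rule sum_mono)
      fix i assume i: "i \<in> F"
      show "x i powr t * y i powr (1-t) \<le> X powr t * Y powr (1-t) * (t * (x i / X) + (1-t) * (y i / Y))"
      proof (cases "x i = 0 \<or> y i = 0")
        case True
        then have z: "x i powr t * y i powr (1-t) = 0" using t by auto
        have "0 \<le> X powr t * Y powr (1-t) * (t * (x i / X) + (1-t) * (y i / Y))"
          using x[OF i] y[OF i] Xp t by (intro mult_nonneg_nonneg add_nonneg_nonneg) auto
        then show ?thesis unfolding z .
      next
        case False
        then have pos: "x i / X > 0" "y i / Y > 0" using x[OF i] y[OF i] Xp by auto
        have "(x i / X) powr t * (y i / Y) powr (1-t) \<le> t * (x i / X) + (1-t) * (y i / Y)"
          using Youngs_inequality_0[of t "1-t" "x i / X" "y i / Y"] pos t by simp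
        then have "X powr t * Y powr (1-t) * ((x i / X) powr t * (y i / Y) powr (1-t))
            \<le> X powr t * Y powr (1-t) * (t * (x i / X) + (1-t) * (y i / Y))"
          by (intro mult_left_mono) auto
        moreover have "X powr t * Y powr (1-t) * ((x i / X) powr t * (y i / Y) powr (1-t)) = x i powr t * y i powr (1-t)"
          using Xp x[OF i] y[OF i] by (simp add: powr_divide)
        ultimately show ?thesis by simp
      qed
    qed
    also have "\<dots> = X powr t * Y powr (1-t) * (\<Sum>i\<in>F. (t / X) * x i + ((1-t) / Y) * y i)"
      by (simp add: sum_distrib_left[symmetric])
    also have "(\<Sum>i\<in>F. (t / X) * x i + ((1-t) / Y) * y i) = (t / X) * X + ((1-t) / Y) * Y"
      by (simp only: sum.distrib sum_distrib_left[symmetric] X_def Y_def)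
    also have "(t / X) * X + ((1-t) / Y) * Y = 1" using Xp by simp
    finally have "(\<Sum>i\<in>F. x i powr t * y i powr (1-t)) \<le> X powr t * Y powr (1-t) * 1" .
    then show ?thesis unfolding X_def Y_def by (simp only: mult_1_right)
  qed
qed

lemma interp_id:
  fixes X Y Z W b e1 e2 e3 t p q :: real
  assumes pos: "X > 0" "Y > 0" "Z > 0" "W > 0"
    and r1: "b = t * p + (1-t) * q" and r2: "b * e1 = t * (2-p)" and r3: "e2 = t * (2-p)"
    and r4: "e3 = (1-t) * (2-q)"
  shows "(X * Y powr e1) powr b * Z powr e2 * W powr e3
     = (X powr p * Y powr (2-p) * Z powr (2-p)) powr t * (X powr q * W powr (2-q)) powr (1-t)"
proof -
  have l1: "ln ((X * Y powr e1) powr b * Z powr e2 * W powr e3) = b * (ln X + e1 * ln Y) + e2 * ln Z + e3 * ln W"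
    using pos by (simp add: ln_mult ln_powr)
  have l2: "ln ((X powr p * Y powr (2-p) * Z powr (2-p)) powr t * (X powr q * W powr (2-q)) powr (1-t))
     = t * (p * ln X + (2-p) * ln Y + (2-p) * ln Z) + (1-t) * (q * ln X + (2-q) * ln W)"
    using pos by (simp add: ln_mult ln_powr)
  have "b * (ln X + e1 * ln Y) + e2 * ln Z + e3 * ln W = b * ln X + (b * e1) * ln Y + e2 * ln Z + e3 * ln W"
    by (simp add: distrib_left mult.assoc)
  also have "\<dots> = t * (p * ln X + (2-p) * ln Y + (2-p) * ln Z) + (1-t) * (q * ln X + (2-q) * ln W)"
    unfolding r2 r3 r4 unfolding r1 by (simp add: distrib_left distrib_right mult.assoc)
  finally have "ln ((X * Y powr e1) powr b * Z powr e2 * W powr e3) = ln ((X powr p * Y powr (2-p) * Z powr (2-p)) powr t * (X powr q * W powr (2-q)) powr (1-t))"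
    using l1 l2 by simp
  then show ?thesis using pos by (simp add: ln_inj_iff)
qed

lemma final_step:
  fixes g :: "'i \<Rightarrow> real"
  assumes g0: "\<And>\<xi>. g \<xi> \<ge> 0" and Cc: "Cc > 0" and Mr: "Mr > 0" and I: "I \<ge> 0" and b: "b > 0"
    and bound: "\<And>F. finite F \<Longrightarrow> (\<Sum>\<xi>\<in>F. g \<xi>) \<le> Cc * Mr powr (1 - b/q) * I powr (b/p)"
  shows "g summable_on UNIV \<and> (\<Sum>\<^sub>\<infinity>\<xi>. g \<xi>) powr (1/b) \<le> Cc powr (1/b) * Mr powr (1/b - 1/q) * I powr (1/p)"
proof
  show sm: "g summable_on UNIV"
    by (rule nonneg_bdd_above_summable_on) (use g0 bound in \<open>auto simp: bdd_above_def\<close>)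
  have "(\<Sum>\<^sub>\<infinity>\<xi>. g \<xi>) \<le> Cc * Mr powr (1 - b/q) * I powr (b/p)"
    by (rule infsum_le_finite_sums[OF sm]) (use bound in auto)
  moreover have "(\<Sum>\<^sub>\<infinity>\<xi>. g \<xi>) \<ge> 0" by (rule infsum_nonneg) (use g0 in auto)
  ultimately have "(\<Sum>\<^sub>\<infinity>\<xi>. g \<xi>) powr (1/b) \<le> (Cc * Mr powr (1 - b/q) * I powr (b/p)) powr (1/b)"
    using b by (intro powr_mono2) auto
  also have "\<dots> = Cc powr (1/b) * Mr powr ((1 - b/q) * (1/b)) * I powr ((b/p) * (1/b))"
    using Cc Mr I by (simp add: powr_mult powr_powr)
  also have "(1 - b/q) * (1/b) = 1/b - 1/q" using b by (simp add: field_simps)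
  also have "(b/p) * (1/b) = 1/p" using b by simp
  finally show "(\<Sum>\<^sub>\<infinity>\<xi>. g \<xi>) powr (1/b) \<le> Cc powr (1/b) * Mr powr (1/b - 1/q) * I powr (1/p)" .
qed

lemma mphi_facts:
  fixes M :: "'a measure" and u :: "'i \<Rightarrow> 'a \<Rightarrow> complex" and \<phi> :: "'i \<Rightarrow> real"
  assumes fin: "Mphi M u \<phi> < \<infinity>" and \<phi>: "\<And>\<xi>. \<phi> \<xi> > 0" and lu: "\<And>\<xi>. Linf_norm M (u \<xi>) > 0"
  shows "\<And>t F. t > 0 \<Longrightarrow> finite F \<Longrightarrow> t * (\<Sum>\<xi>\<in>{\<xi>\<in>F. t \<le> \<phi> \<xi>}. (Linf_norm M (u \<xi>))^2) \<le> enn2real (Mphi M u \<phi>)"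
    and "enn2real (Mphi M u \<phi>) > 0"
proof -
  have key: "t * (\<Sum>\<xi>\<in>{\<xi>\<in>F. t \<le> \<phi> \<xi>}. (Linf_norm M (u \<xi>))^2) \<le> enn2real (Mphi M u \<phi>)"
    if t: "t > 0" and F: "finite F" for t F
  proof -
    have "(\<Sum>\<xi>\<in>{\<xi>\<in>F. t \<le> \<phi> \<xi>}. ennreal ((Linf_norm M (u \<xi>))^2))
        \<le> (\<Sum>\<^sub>\<infinity>\<xi>\<in>{\<xi>. t \<le> \<phi> \<xi>}. ennreal ((Linf_norm M (u \<xi>))^2))"
    proof -
      have fin: "finite {\<xi>\<in>F. t \<le> \<phi> \<xi>}" using F by simp
      have "(\<Sum>\<xi>\<in>{\<xi>\<in>F. t \<le> \<phi> \<xi>}. ennreal ((Linf_norm M (u \<xi>))^2))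
          = (\<Sum>\<^sub>\<infinity>\<xi>\<in>{\<xi>\<in>F. t \<le> \<phi> \<xi>}. ennreal ((Linf_norm M (u \<xi>))^2))"
        using fin by simp
      also have "\<dots> \<le> (\<Sum>\<^sub>\<infinity>\<xi>\<in>{\<xi>. t \<le> \<phi> \<xi>}. ennreal ((Linf_norm M (u \<xi>))^2))"
        by (intro infsum_mono_neutral nonneg_summable_on_complete) auto
      finally show ?thesis .
    qed
    then have "ennreal t * (\<Sum>\<xi>\<in>{\<xi>\<in>F. t \<le> \<phi> \<xi>}. ennreal ((Linf_norm M (u \<xi>))^2))
        \<le> ennreal t * (\<Sum>\<^sub>\<infinity>\<xi>\<in>{\<xi>. t \<le> \<phi> \<xi>}. ennreal ((Linf_norm M (u \<xi>))^2))"
      by (rule mult_left_mono) auto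
    also have "\<dots> \<le> Mphi M u \<phi>" unfolding Mphi_def using t by (intro SUP_upper) auto
    finally have le: "ennreal (t * (\<Sum>\<xi>\<in>{\<xi>\<in>F. t \<le> \<phi> \<xi>}. (Linf_norm M (u \<xi>))^2)) \<le> Mphi M u \<phi>"
      using t by (simp add: ennreal_mult' sum_ennreal)
    have X0: "0 \<le> t * (\<Sum>\<xi>\<in>{\<xi>\<in>F. t \<le> \<phi> \<xi>}. (Linf_norm M (u \<xi>))^2)"
      using t by (intro mult_nonneg_nonneg sum_nonneg) auto
    have "enn2real (ennreal (t * (\<Sum>\<xi>\<in>{\<xi>\<in>F. t \<le> \<phi> \<xi>}. (Linf_norm M (u \<xi>))^2))) \<le> enn2real (Mphi M u \<phi>)"
      using le fin by (intro enn2real_mono) auto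
    then show ?thesis using X0 by simp
  qed
  then show "\<And>t F. t > 0 \<Longrightarrow> finite F \<Longrightarrow> t * (\<Sum>\<xi>\<in>{\<xi>\<in>F. t \<le> \<phi> \<xi>}. (Linf_norm M (u \<xi>))^2) \<le> enn2real (Mphi M u \<phi>)"
    by blast
  define \<xi>0 :: 'i where "\<xi>0 = undefined"
  have "\<phi> \<xi>0 * (\<Sum>\<xi>\<in>{\<xi>\<in>{\<xi>0}. \<phi> \<xi>0 \<le> \<phi> \<xi>}. (Linf_norm M (u \<xi>))^2) \<le> enn2real (Mphi M u \<phi>)"
    by (rule key) (use \<phi> in auto)
  moreover have "{\<xi>\<in>{\<xi>0}. \<phi> \<xi>0 \<le> \<phi> \<xi>} = {\<xi>0}" by auto
  moreover have "\<phi> \<xi>0 * (Linf_norm M (u \<xi>0))^2 > 0" using \<phi>[of \<xi>0] lu[of \<xi>0] by (intro mult_pos_pos) auto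
  ultimately show "enn2real (Mphi M u \<phi>) > 0" by simp
qed

lemma term_bp:
  fixes X ph lu lv p :: real
  assumes p: "1 < p" and pos: "ph > 0" "lu > 0" "lv > 0" and X: "X \<ge> 0"
  shows "(X * ph powr (1/p - 1/(p/(p-1)))) powr p * lu powr (1 - p/(p/(p-1))) * lv powr (1 - p/p)
       = X powr p * (ph * lu) powr (2-p)"
proof -
  have e1: "(1/p - 1/(p/(p-1))) * p = 2 - p" using p by (simp add: field_simps)
  have e2: "1 - p/(p/(p-1)) = 2 - p" using p by (simp add: field_simps)
  have "(X * ph powr (1/p - 1/(p/(p-1)))) powr p = X powr p * ph powr ((1/p - 1/(p/(p-1))) * p)"
    using X pos by (simp add: powr_mult powr_powr)
  then show ?thesis unfolding e1 e2 using p pos by (simp add: powr_mult)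
qed

lemma term_bq:
  fixes X ph lu lv p :: real
  assumes p: "1 < p" and pos: "ph > 0" "lu > 0" "lv > 0" and X: "X \<ge> 0"
  shows "(X * ph powr (1/(p/(p-1)) - 1/(p/(p-1)))) powr (p/(p-1)) * lu powr (1 - (p/(p-1))/(p/(p-1)))
       * lv powr (1 - (p/(p-1))/p) = X powr (p/(p-1)) * lv powr (2 - p/(p-1))"
proof -
  have e: "1 - (p/(p-1))/p = 2 - p/(p-1)" using p by (simp add: field_simps)
  show ?thesis unfolding e using p pos by simp
qed

lemma aux_frac: fixes a q u v :: real assumes "u \<noteq> 0" shows "(a / (q * u)) * (- u / v) = - a / (q * v)"
  using assms by (simp add: field_simps)

lemma term_mid:
  fixes X ph lu lv p b :: real
  assumes p: "1 < p" "p < 2" and pos: "ph > 0" "lu > 0" "lv > 0" and X: "X \<ge> 0"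
    and b: "p < b" "b < p/(p-1)"
  shows "(X * ph powr (1/b - 1/(p/(p-1)))) powr b * lu powr (1 - b/(p/(p-1))) * lv powr (1 - b/p)
     = (X powr p * (ph * lu) powr (2-p)) powr ((p/(p-1) - b)/(p/(p-1) - p))
       * (X powr (p/(p-1)) * lv powr (2 - p/(p-1))) powr (1 - (p/(p-1) - b)/(p/(p-1) - p))"
proof (cases "X = 0")
  case True
  have "(p/(p-1) - b)/(p/(p-1) - p) > 0" using b p by (intro divide_pos_pos) auto
  then show ?thesis using True b p by simp
next
  case False
  then have Xp: "X > 0" using X by simp
  define q where "q = p/(p-1)"
  define t where "t = (q - b)/(q - p)"
  have qp: "q - p = q * (2-p)" using p by (simp add: q_def field_simps)
  have qm: "q * (p-1) = p" using p by (simp add: q_def)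
  have qgt: "q > p" using b by (simp add: q_def)
  have r1: "b = t * p + (1-t) * q"
  proof -
    have "t * (q-p) = q - b" using qgt by (simp add: t_def)
    moreover have "t * p + (1-t) * q = q - t * (q-p)" by (simp add: algebra_simps)
    ultimately show ?thesis by linarith
  qed
  have r3: "1 - b/q = t * (2-p)"
  proof -
    have tt: "t = (q - b) / (q * (2-p))" unfolding t_def qp ..
    have "q > 0" using qgt p by simp
    then have "t * (2-p) = (q - b) / q" unfolding tt using p by (simp add: field_simps)
    then show ?thesis using qgt p by (simp add: field_simps)
  qed
  have r2: "b * (1/b - 1/q) = t * (2-p)"
  proof -
    have "b * (1/b - 1/q) = 1 - b/q" using b p by (simp add: field_simps)
    then show ?thesis using r3 by simp
  qed
  have r4: "1 - b/p = (1-t) * (2-q)"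
  proof -
    have q0: "q > 0" using qgt p by simp
    have o1: "1 - t = (b - p)/(q - p)" using qgt by (simp add: t_def field_simps)
    have tq: "2 - q = - (2-p) / (p-1)" using p by (simp add: q_def field_simps)
    have "(1-t) * (2-q) = ((b - p)/(q * (2-p))) * (- (2-p) / (p-1))" unfolding o1 tq qp ..
    also have "\<dots> = - (b - p) / (q * (p-1))" using p by (intro aux_frac) auto
    also have "\<dots> = 1 - b/p" unfolding qm using p by (simp add: field_simps)
    finally show ?thesis by simp
  qed
  have split: "(ph * lu) powr (2-p) = ph powr (2-p) * lu powr (2-p)" using pos by (simp add: powr_mult)
  show ?thesis
    unfolding q_def[symmetric] t_def[symmetric] split
    using interp_id[OF Xp pos r1 r2 r3 r4] by (simp add: mult.assoc)
qed

lemma eps_le: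
  fixes S X K :: real
  assumes "\<And>d. 0 < d \<Longrightarrow> d \<le> 1 \<Longrightarrow> S \<le> X + d * K"
  shows "S \<le> X"
proof (rule ccontr)
  assume "\<not> S \<le> X"
  then have sx: "S - X > 0" by simp
  define d where "d = min 1 ((S - X) / (2 * (\<bar>K\<bar> + 1)))"
  have d: "0 < d" "d \<le> 1" using sx by (auto simp: d_def)
  have "d * K \<le> d * \<bar>K\<bar>" using d by (simp add: mult_left_mono)
  also have "d * \<bar>K\<bar> \<le> ((S - X) / (2 * (\<bar>K\<bar> + 1))) * \<bar>K\<bar>"
    by (intro mult_right_mono) (auto simp: d_def)
  also have "\<dots> < S - X"
  proof -
    have "((S - X) / (2 * (\<bar>K\<bar> + 1))) * \<bar>K\<bar> = (S - X) * (\<bar>K\<bar> / (2 * (\<bar>K\<bar> + 1)))" by simp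
    also have "\<bar>K\<bar> / (2 * (\<bar>K\<bar> + 1)) < 1" by (simp add: field_simps)
    then have "(S - X) * (\<bar>K\<bar> / (2 * (\<bar>K\<bar> + 1))) < (S - X) * 1"
      using sx by (intro mult_strict_left_mono) auto
    finally show ?thesis by simp
  qed
  finally show False using assms[OF d] by linarith
qed

lemma bessel:
  fixes M :: "'a measure" and u v :: "'i \<Rightarrow> 'a \<Rightarrow> complex" and A :: real
  assumes uL2: "\<And>\<xi>. L2 M (u \<xi>)" and vL2: "\<And>\<xi>. L2 M (v \<xi>)"
    and vn: "\<And>\<xi>. (\<integral>x. (norm (v \<xi> x))^2 \<partial>M) = 1"
    and biorth: "\<And>\<xi> \<eta>. L2_inner M (u \<xi>) (v \<eta>) = (if \<xi> = \<eta> then 1 else 0)"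
    and A: "A > 0"
    and RA: "\<And>G c. finite G \<Longrightarrow> A * (\<Sum>\<xi>\<in>G. (cmod (c \<xi>))\<^sup>2) \<le> (Lp_norm M 2 (\<lambda>x. \<Sum>\<xi>\<in>G. c \<xi> * u \<xi> x))\<^sup>2"
    and dense: "\<And>f \<epsilon>. L2 M f \<Longrightarrow> \<epsilon> > 0 \<Longrightarrow> \<exists>G c. finite G \<and> Lp_norm M 2 (\<lambda>x. f x - (\<Sum>\<xi>\<in>G. c \<xi> * u \<xi> x)) < \<epsilon>"
    and g: "L2 M g" and F: "finite F"
  shows "(\<Sum>\<xi>\<in>F. (cmod (FL M v g \<xi>))^2) \<le> (\<integral>x. (norm (g x))^2 \<partial>M) / A"
proof -
  define G2 where "G2 = (\<integral>x. (norm (g x))^2 \<partial>M)"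
  have G2: "G2 \<ge> 0" unfolding G2_def by simp
  show ?thesis unfolding G2_def[symmetric]
  proof (rule eps_le[where K = "3 * G2 / A + 4 / A + 2 * real (card F)"])
    fix d :: real assume d: "0 < d" "d \<le> 1"
    obtain G c where G: "finite G" and Gc: "Lp_norm M 2 (\<lambda>x. g x - (\<Sum>\<xi>\<in>G. c \<xi> * u \<xi> x)) < d"
      using dense[OF g d(1)] by blast
    define h where "h x = (\<Sum>\<eta>\<in>G. c \<eta> * u \<eta> x)" for x
    define e where "e x = g x - h x" for x
    have hL2: "L2 M h" unfolding h_def using G uL2 by (intro L2_sum L2_scale) auto
    have eL2: "L2 M e" unfolding e_def using g hL2 by (rule L2_diff)
    have eint: "(\<integral>x. (norm (e x))^2 \<partial>M) \<le> d^2"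
    proof -
      have "(Lp_norm M 2 e)^2 \<le> d^2"
        using Gc unfolding e_def h_def by (intro power_mono) (auto simp: Lp_norm_def)
      then show ?thesis by (simp add: Lp_norm_2_sq)
    qed
    have FLh: "FL M v h \<xi> = (if \<xi> \<in> G then c \<xi> else 0)" for \<xi>
    proof -
      have "FL M v h \<xi> = (\<integral>x. (\<Sum>\<eta>\<in>G. c \<eta> * (u \<eta> x * cnj (v \<xi> x))) \<partial>M)"
        unfolding FL_def h_def by (rule arg_cong[where f="integral\<^sup>L M"], rule ext) (simp add: sum_distrib_left mult_ac)
      also have "\<dots> = (\<Sum>\<eta>\<in>G. c \<eta> * (\<integral>x. u \<eta> x * cnj (v \<xi> x) \<partial>M))"
        using uL2 vL2 by (simp add: integral_sum L2_prod_int)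
      also have "\<dots> = (\<Sum>\<eta>\<in>G. c \<eta> * (if \<eta> = \<xi> then 1 else 0))"
        using biorth by (simp add: L2_inner_def)
      also have "\<dots> = (if \<xi> \<in> G then c \<xi> else 0)"
      proof -
        have "(\<Sum>\<eta>\<in>G. c \<eta> * (if \<eta> = \<xi> then 1 else 0)) = (\<Sum>\<eta>\<in>G. if \<eta> = \<xi> then c \<eta> else 0)"
          by (intro sum.cong) auto
        then show ?thesis using G by (simp add: sum.delta)
      qed
      finally show ?thesis .
    qed
    have FLsplit: "FL M v g \<xi> = FL M v h \<xi> + FL M v e \<xi>" for \<xi>
    proof -
      have "(\<lambda>x. g x * cnj (v \<xi> x)) = (\<lambda>x. h x * cnj (v \<xi> x) + e x * cnj (v \<xi> x))"
        by (auto simp: e_def algebra_simps)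
      then show ?thesis unfolding FL_def
        using L2_prod_int[OF hL2 vL2] L2_prod_int[OF eL2 vL2] by simp
    qed
    have FLe: "norm (FL M v e \<xi>) \<le> d" for \<xi>
    proof -
      have "norm (FL M v e \<xi>) \<le> ((\<integral>x. (norm (e x))^2 \<partial>M) / d + d * 1) / 2"
        unfolding FL_def using L2_inner_bound[OF eL2 vL2 d(1)] vn by simp
      also have "\<dots> \<le> (d^2 / d + d * 1) / 2"
        using eint d by (intro divide_right_mono add_right_mono divide_right_mono) auto
      also have "\<dots> = d" using d by (simp add: power2_eq_square)
      finally show ?thesis .
    qed
    have hint: "(\<integral>x. (norm (h x))^2 \<partial>M) \<le> (1+d) * G2 + (1 + 1/d) * d^2"
    proof -
      have "(\<integral>x. (norm (h x))^2 \<partial>M) \<le> (\<integral>x. (1+d) * (norm (g x))^2 + (1+1/d) * (norm (-e x))^2 \<partial>M)"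
      proof (rule integral_mono')
        show "integrable M (\<lambda>x. (1+d) * (norm (g x))^2 + (1+1/d) * (norm (-e x))^2)"
          using g eL2 by (auto simp: L2_def)
        fix x
        have "h x = g x + (- e x)" by (simp add: e_def)
        then show "(norm (h x))^2 \<le> (1+d) * (norm (g x))^2 + (1+1/d) * (norm (-e x))^2"
          using norm_sq_split[OF d(1), of "g x" "- e x"] by simp
        show "0 \<le> (1+d) * (norm (g x))^2 + (1+1/d) * (norm (-e x))^2" using d by simp
      qed
      also have "\<dots> = (1+d) * G2 + (1+1/d) * (\<integral>x. (norm (e x))^2 \<partial>M)"
        using g eL2 by (simp add: L2_def G2_def)
      also have "\<dots> \<le> (1+d) * G2 + (1+1/d) * d^2"
        using eint d by (intro add_left_mono mult_left_mono) auto
      finally show ?thesis .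
    qed
    have T1: "(\<Sum>\<xi>\<in>F. (cmod (FL M v g \<xi>))^2) \<le> (1+d) * (\<Sum>\<xi>\<in>F. (cmod (FL M v h \<xi>))^2) + (1+1/d) * (\<Sum>\<xi>\<in>F. (cmod (FL M v e \<xi>))^2)"
    proof -
      have "(\<Sum>\<xi>\<in>F. (cmod (FL M v g \<xi>))^2) \<le> (\<Sum>\<xi>\<in>F. (1+d) * (cmod (FL M v h \<xi>))^2 + (1+1/d) * (cmod (FL M v e \<xi>))^2)"
        by (intro sum_mono) (simp add: FLsplit norm_sq_split[OF d(1)])
      also have "\<dots> = (1+d) * (\<Sum>\<xi>\<in>F. (cmod (FL M v h \<xi>))^2) + (1+1/d) * (\<Sum>\<xi>\<in>F. (cmod (FL M v e \<xi>))^2)"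
        by (simp add: sum.distrib sum_distrib_left)
      finally show ?thesis .
    qed
    have T2: "(\<Sum>\<xi>\<in>F. (cmod (FL M v e \<xi>))^2) \<le> real (card F) * d^2"
    proof -
      have "(\<Sum>\<xi>\<in>F. (cmod (FL M v e \<xi>))^2) \<le> (\<Sum>\<xi>\<in>F. d^2)"
        using FLe by (intro sum_mono power_mono) auto
      then show ?thesis by simp
    qed
    have T3: "(\<Sum>\<xi>\<in>F. (cmod (FL M v h \<xi>))^2) \<le> (\<integral>x. (norm (h x))^2 \<partial>M) / A"
    proof -
      have "(\<Sum>\<xi>\<in>F. (cmod (FL M v h \<xi>))^2) = (\<Sum>\<xi>\<in>F \<inter> G. (cmod (c \<xi>))^2)"
        using F by (simp add: FLh sum.inter_restrict, intro sum.cong) auto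
      also have "\<dots> \<le> (\<Sum>\<xi>\<in>G. (cmod (c \<xi>))^2)" using G by (intro sum_mono2) auto
      also have "\<dots> \<le> (Lp_norm M 2 h)^2 / A"
        using RA[OF G, of c] A unfolding h_def by (simp add: field_simps)
      finally show ?thesis by (simp add: Lp_norm_2_sq)
    qed
    have S1: "(\<Sum>\<xi>\<in>F. (cmod (FL M v g \<xi>))^2)
        \<le> (1+d) * ((\<integral>x. (norm (h x))^2 \<partial>M) / A) + (1+1/d) * (real (card F) * d^2)"
    proof -
      have "(1+d) * (\<Sum>\<xi>\<in>F. (cmod (FL M v h \<xi>))^2) \<le> (1+d) * ((\<integral>x. (norm (h x))^2 \<partial>M) / A)"
        using T3 d by (intro mult_left_mono) auto
      moreover have "(1+1/d) * (\<Sum>\<xi>\<in>F. (cmod (FL M v e \<xi>))^2) \<le> (1+1/d) * (real (card F) * d^2)"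
        using T2 d by (intro mult_left_mono) auto
      ultimately show ?thesis using T1 by linarith
    qed
    have S2: "(1+d) * ((\<integral>x. (norm (h x))^2 \<partial>M) / A) \<le> (1+d) * (((1+d) * G2 + (1 + 1/d) * d^2) / A)"
      using hint A d by (intro mult_left_mono divide_right_mono) auto
    have e1: "(1 + 1/d) * d^2 = d + d^2" using d by (simp add: field_simps power2_eq_square)
    have S3: "(1+d) * (((1+d) * G2 + (d + d^2)) / A) \<le> G2 / A + d * (3 * G2 / A + 4 / A)"
    proof -
      have "(1+d) * ((1+d) * G2 + (d + d^2)) \<le> G2 + d * (3 * G2 + 4)"
      proof -
        have "(1+d) * ((1+d) * G2 + (d + d^2)) = G2 + d * (2 * G2 + d * G2 + (1 + d) * (1 + d))"
          by (simp add: algebra_simps power2_eq_square)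
        also have "d * (2 * G2 + d * G2 + (1 + d) * (1 + d)) \<le> d * (3 * G2 + 4)"
        proof -
          have "d * G2 \<le> G2" using d G2 by (simp add: mult_left_le_one_le)
          moreover have "(1 + d) * (1 + d) \<le> 4" using d mult_mono[of "1+d" 2 "1+d" 2] by simp
          ultimately show ?thesis using d by (intro mult_left_mono) auto
        qed
        finally show ?thesis by simp
      qed
      then have "(1+d) * ((1+d) * G2 + (d + d^2)) / A \<le> (G2 + d * (3 * G2 + 4)) / A"
        using A by (intro divide_right_mono) auto
      moreover have "(G2 + d * (3 * G2 + 4)) / A = G2 / A + d * (3 * G2 / A + 4 / A)"
        using A by (simp add: add_divide_distrib algebra_simps)
      moreover have "(1+d) * (((1+d) * G2 + (d + d^2)) / A) = (1+d) * ((1+d) * G2 + (d + d^2)) / A"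
        by simp
      ultimately show ?thesis by linarith
    qed
    have S4: "(1+1/d) * (real (card F) * d^2) = real (card F) * (d + d^2)"
      using e1 by (simp add: algebra_simps)
    have S5: "real (card F) * (d + d^2) \<le> d * (2 * real (card F))"
    proof -
      have "d^2 \<le> d" using d by (simp add: power2_eq_square mult_left_le_one_le)
      then have "real (card F) * d^2 \<le> real (card F) * d" by (intro mult_left_mono) auto
      then show ?thesis by (simp add: algebra_simps)
    qed
    show "(\<Sum>\<xi>\<in>F. (cmod (FL M v g \<xi>))^2) \<le> G2 / A + d * (3 * G2 / A + 4 / A + 2 * real (card F))"
    proof -
      have S2': "(1+d) * ((\<integral>x. (norm (h x))^2 \<partial>M) / A) \<le> (1+d) * (((1+d) * G2 + (d + d^2)) / A)"
        using S2 unfolding e1 .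
      have ge: "G2 / A + d * (3 * G2 / A + 4 / A + 2 * real (card F)) = G2 / A + d * (3 * G2 / A + 4 / A) + d * (2 * real (card F))"
        by (simp add: algebra_simps)
      show ?thesis using S1 S2' S3 S4 S5 ge by linarith
    qed
  qed
qed

lemma exps:
  fixes p b q t :: real
  assumes p: "1 < p" "p < 2" and b: "p < b" "b < q" and q: "q = p/(p-1)" and t: "t = (q-b)/(q-p)"
  shows "t * (2-p) = 1 - b/q" "t + (1-t) * (1/(p-1)) = b/p" "0 < t" "t < 1"
proof -
  have qp: "q - p = q * (2-p)" using p by (simp add: q field_simps)
  have qgt: "q > p" using b by simp
  have q0: "q > 0" using qgt p by simp
  have tt: "t = (q - b) / (q * (2-p))" unfolding t qp ..
  show "t * (2-p) = 1 - b/q" unfolding tt using p q0 by (simp add: field_simps)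
  have r1: "b = t * p + (1-t) * q"
  proof -
    have "t * (q-p) = q - b" using qgt by (simp add: t)
    moreover have "t * p + (1-t) * q = q - t * (q-p)" by (simp add: algebra_simps)
    ultimately show ?thesis by linarith
  qed
  have qm: "1/(p-1) = q/p" using p by (simp add: q field_simps)
  have "t + (1-t) * (q/p) = (t * p + (1-t) * q) / p" using p by (simp add: field_simps)
  then show "t + (1-t) * (1/(p-1)) = b/p" unfolding qm r1[symmetric] .
  show "0 < t" unfolding t using b qgt by (intro divide_pos_pos) auto
  show "t < 1" unfolding t using b qgt by (simp add: field_simps)
qed

lemma mid_alg:
  fixes c1 c2 Mr I e t k :: real
  assumes pos: "c1 > 0" "c2 > 0" "Mr > 0" "I \<ge> 0" and t: "0 < t" "t < 1" and k: "k > 0"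
  shows "(c1 * Mr powr e * I) powr t * (c2 * I powr k) powr (1-t)
    = (c1 powr t * c2 powr (1-t)) * Mr powr (e*t) * I powr (t + (1-t) * k)"
proof (cases "I = 0")
  case True
  have "t + (1-t) * k > 0" using t k by (simp add: add_pos_nonneg)
  then show ?thesis using True t by simp
next
  case False
  then have Ip: "I > 0" using pos by simp
  have "(c1 * Mr powr e * I) powr t = c1 powr t * Mr powr (e*t) * I powr t"
    using pos Ip by (simp add: powr_mult powr_powr)
  moreover have "(c2 * I powr k) powr (1-t) = c2 powr (1-t) * I powr (k * (1-t))"
    using pos Ip by (simp add: powr_mult powr_powr)
  moreover have "I powr t * I powr (k * (1-t)) = I powr (t + (1-t) * k)"
    using Ip by (simp add: powr_add[symmetric] mult.commute)
  ultimately show ?thesis by (simp add: mult_ac)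
qed

theorem mainTheorem7:
  fixes M :: "'a measure" and u v :: "'i \<Rightarrow> 'a \<Rightarrow> complex" and p b :: real
  assumes sf: "sigma_finite_measure M"
    and uL2: "\<And>\<xi>. in_Lp M 2 (u \<xi>)" and vL2: "\<And>\<xi>. in_Lp M 2 (v \<xi>)"
    and unorm: "\<And>\<xi>. Lp_norm M 2 (u \<xi>) = 1" and vnorm: "\<And>\<xi>. Lp_norm M 2 (v \<xi>) = 1"
    and biorth: "\<And>\<xi> \<eta>. L2_inner M (u \<xi>) (v \<eta>) = (if \<xi> = \<eta> then 1 else 0)"
    and riesz: "riesz_basis M u"
    and uLinf: "\<And>\<xi>. in_Linf M (u \<xi>)" and vLinf: "\<And>\<xi>. in_Linf M (v \<xi>)"
    and ratio: "\<exists>K. \<forall>\<xi>. Linf_norm M (v \<xi>) / Linf_norm M (u \<xi>) \<le> K"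
    and p: "1 < p" "p \<le> 2"
    and b: "p \<le> b" "b \<le> p / (p - 1)"
  shows "\<exists>C>0. \<forall>\<phi> :: 'i \<Rightarrow> real. (\<forall>\<xi>. 0 < \<phi> \<xi>) \<longrightarrow> Mphi M u \<phi> < \<infinity> \<longrightarrow>
     (\<forall>f. in_Lp M p f \<longrightarrow>
        (let q = p / (p - 1);
             g = (\<lambda>\<xi>. (cmod (FL M v f \<xi>) * \<phi> \<xi> powr (1 / b - 1 / q)) powr b
                       * Linf_norm M (u \<xi>) powr (1 - b / q)
                       * Linf_norm M (v \<xi>) powr (1 - b / p))
         in g summable_on UNIV \<and>
            (\<Sum>\<^sub>\<infinity>\<xi>. g \<xi>) powr (1 / b)
              \<le> C * enn2real (Mphi M u \<phi>) powr (1 / b - 1 / q) * Lp_norm M p f))"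
proof -
  define q where "q = p / (p - 1)"
  define lu where "lu \<xi> = Linf_norm M (u \<xi>)" for \<xi>
  define lv where "lv \<xi> = Linf_norm M (v \<xi>)" for \<xi>
  have uL2': "L2 M (u \<xi>)" for \<xi> using uL2 by (simp add: in_Lp_2)
  have vL2': "L2 M (v \<xi>)" for \<xi> using vL2 by (simp add: in_Lp_2)
  have vn: "(\<integral>x. (norm (v \<xi> x))^2 \<partial>M) = 1" for \<xi>
    using Lp_norm_2_sq[of M "v \<xi>"] vnorm[of \<xi>] by simp
  have lupos: "lu \<xi> > 0" for \<xi> unfolding lu_def using Linf_pos[OF uLinf uL2' unorm] .
  have lvpos: "lv \<xi> > 0" for \<xi> unfolding lv_def using Linf_pos[OF vLinf vL2' vnorm] .
  have vm: "v \<xi> \<in> borel_measurable M" for \<xi> using vL2' by (simp add: L2_def)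
  obtain K where K: "\<And>\<xi>. lv \<xi> / lu \<xi> \<le> K" using ratio unfolding lu_def lv_def by blast
  define K' where "K' = max K 1"
  have K'pos: "K' > 0" by (simp add: K'_def)
  have lvle: "lv \<xi> \<le> K' * lu \<xi>" for \<xi>
  proof -
    have "lv \<xi> / lu \<xi> \<le> K'" using K[of \<xi>] by (simp add: K'_def)
    then show ?thesis using lupos[of \<xi>] by (simp add: field_simps)
  qed
  obtain A where A: "A > 0"
    and RA: "\<And>G c. finite G \<Longrightarrow> A * (\<Sum>\<xi>\<in>G. (cmod (c \<xi>))\<^sup>2) \<le> (Lp_norm M 2 (\<lambda>x. \<Sum>\<xi>\<in>G. c \<xi> * u \<xi> x))\<^sup>2"
    using riesz unfolding riesz_basis_def by blast
  have dense: "\<And>f \<epsilon>. L2 M f \<Longrightarrow> \<epsilon> > 0 \<Longrightarrow> \<exists>G c. finite G \<and> Lp_norm M 2 (\<lambda>x. f x - (\<Sum>\<xi>\<in>G. c \<xi> * u \<xi> x)) < \<epsilon>"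
    using riesz unfolding riesz_basis_def in_Lp_2 by blast
  define Bc where "Bc = 1 / A"
  have Bc: "Bc > 0" using A by (simp add: Bc_def)
  have Tadd: "FL M v (\<lambda>x. g x + h x) \<xi> = FL M v g \<xi> + FL M v h \<xi>" if "L1 M g" "L2 M h" for g h \<xi>
  proof -
    have i1: "integrable M (\<lambda>x. g x * cnj (v \<xi> x))"
      using L1_prod(1)[OF that(1) vm _ Linf_AE[OF vLinf]] lvpos[of \<xi>] by (simp add: lv_def)
    have i2: "integrable M (\<lambda>x. h x * cnj (v \<xi> x))" using L2_prod_int[OF that(2) vL2'] .
    show ?thesis unfolding FL_def using i1 i2 by (simp add: distrib_right)
  qed
  have T1: "norm (FL M v g \<xi>) \<le> lv \<xi> * (\<integral>x. norm (g x) \<partial>M)" if "L1 M g" for g \<xi>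
    unfolding FL_def lv_def using L1_prod(2)[OF that vm _ Linf_AE[OF vLinf]] lvpos[of \<xi>] by (simp add: lv_def)
  have T2: "(\<Sum>\<xi>\<in>F. (norm (FL M v h \<xi>))^2) \<le> Bc * (\<integral>x. (norm (h x))^2 \<partial>M)" if "L2 M h" "finite F" for h F
    using bessel[OF uL2' vL2' vn biorth A RA dense that] by (simp add: Bc_def)
  define c1 where "c1 = CP p * Bc powr (p-1) * K' powr (2-p)"
  define c2 where "c2 = (CP p * Bc powr (p-1)) powr (1/(p-1))"
  have NC: "\<And>t F. t > 0 \<Longrightarrow> finite F \<Longrightarrow> t * (\<Sum>\<xi>\<in>{\<xi>\<in>F. t \<le> \<phi> \<xi>}. (lu \<xi>)^2) \<le> enn2real (Mphi M u \<phi>)"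
    and Mrpos: "enn2real (Mphi M u \<phi>) > 0"
    if "\<And>\<xi>. \<phi> \<xi> > 0" "Mphi M u \<phi> < \<infinity>" for \<phi>
    using mphi_facts[OF that(2) that(1)] lupos unfolding lu_def by auto
  have PaleyF: "(\<Sum>\<xi>\<in>F. norm (FL M v f \<xi>) powr p * (\<phi> \<xi> * lu \<xi>) powr (2-p))
      \<le> c1 * enn2real (Mphi M u \<phi>) powr (2-p) * (\<integral>x. norm (f x) powr p \<partial>M)"
    if p2: "p < 2" and \<phi>: "\<And>\<xi>. \<phi> \<xi> > 0" and fin: "Mphi M u \<phi> < \<infinity>" and f: "in_Lp M p f"
      and F: "finite F" for \<phi> f F
  proof -
    define Mr where "Mr = enn2real (Mphi M u \<phi>)"
    have Mr: "Mr > 0" using Mrpos[OF \<phi> fin] by (simp add: Mr_def)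
    have fm: "f \<in> borel_measurable M" and fi: "integrable M (\<lambda>x. norm (f x) powr p)"
      using f by (auto simp: in_Lp_def)
    define I where "I = (\<integral>x. norm (f x) powr p \<partial>M)"
    have R: "(\<Sum>\<xi>\<in>F. norm (FL M v f \<xi>) powr p * (\<phi> \<xi> * (K' * lu \<xi>)) powr (2-p))
        \<le> CP p * Bc powr (p-1) * (K'^2 * Mr) powr (2-p) * I"
      unfolding I_def
    proof (rule paley_core[OF F, where T = "FL M v" and M = M])
      show "\<And>\<xi>. \<xi> \<in> F \<Longrightarrow> \<phi> \<xi> > 0" using \<phi> by auto
      show "\<And>\<xi>. \<xi> \<in> F \<Longrightarrow> K' * lu \<xi> > 0" using K'pos lupos by simp
      show "1 < p" "p < 2" using p p2 by auto
      show "Bc > 0" by (rule Bc)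
      show "K'^2 * Mr > 0" using K'pos Mr by simp
      show "t * (\<Sum>\<xi>\<in>{\<xi>\<in>F. t \<le> \<phi> \<xi>}. (K' * lu \<xi>)^2) \<le> K'^2 * Mr" if t: "t > 0" for t
      proof -
        have "t * (\<Sum>\<xi>\<in>{\<xi>\<in>F. t \<le> \<phi> \<xi>}. (K' * lu \<xi>)^2) = K'^2 * (t * (\<Sum>\<xi>\<in>{\<xi>\<in>F. t \<le> \<phi> \<xi>}. (lu \<xi>)^2))"
          by (simp add: power_mult_distrib sum_distrib_left mult_ac)
        also have "\<dots> \<le> K'^2 * Mr" unfolding Mr_def using NC[OF \<phi> fin t F] by (intro mult_left_mono) auto
        finally show ?thesis .
      qed
      show "\<And>g h \<xi>. L1 M g \<Longrightarrow> L2 M h \<Longrightarrow> \<xi> \<in> F \<Longrightarrow> FL M v (\<lambda>x. g x + h x) \<xi> = FL M v g \<xi> + FL M v h \<xi>"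
        using Tadd by blast
      show "norm (FL M v g \<xi>) \<le> K' * lu \<xi> * (\<integral>x. norm (g x) \<partial>M)" if "L1 M g" "\<xi> \<in> F" for g \<xi>
      proof -
        have "norm (FL M v g \<xi>) \<le> lv \<xi> * (\<integral>x. norm (g x) \<partial>M)" by (rule T1[OF that(1)])
        also have "\<dots> \<le> K' * lu \<xi> * (\<integral>x. norm (g x) \<partial>M)" using lvle[of \<xi>] by (intro mult_right_mono) auto
        finally show ?thesis .
      qed
      show "\<And>h. L2 M h \<Longrightarrow> (\<Sum>\<xi>\<in>F. (norm (FL M v h \<xi>))^2) \<le> Bc * (\<integral>x. (norm (h x))^2 \<partial>M)"
        using T2 F by blast
    qed (use fm fi in auto)
    define e where "e = 2 - p"
    have eqL: "(\<Sum>\<xi>\<in>F. norm (FL M v f \<xi>) powr p * (\<phi> \<xi> * (K' * lu \<xi>)) powr (2-p))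
        = K' powr e * (\<Sum>\<xi>\<in>F. norm (FL M v f \<xi>) powr p * (\<phi> \<xi> * lu \<xi>) powr (2-p))"
    proof -
      have "(\<phi> \<xi> * (K' * lu \<xi>)) powr (2-p) = K' powr e * (\<phi> \<xi> * lu \<xi>) powr (2-p)" for \<xi>
      proof -
        have "\<phi> \<xi> * (K' * lu \<xi>) = K' * (\<phi> \<xi> * lu \<xi>)" by simp
        then show ?thesis using K'pos \<phi>[of \<xi>] lupos[of \<xi>] by (simp add: powr_mult e_def)
      qed
      then show ?thesis by (simp add: sum_distrib_left mult_ac)
    qed
    have eqR: "(K'^2 * Mr) powr (2-p) = K' powr e * (K' powr e * Mr powr e)"
    proof -
      have "K'^2 * Mr = K' * (K' * Mr)" by (simp add: power2_eq_square)
      then show ?thesis using K'pos Mr by (simp add: powr_mult e_def)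
    qed
    have "K' powr e * (\<Sum>\<xi>\<in>F. norm (FL M v f \<xi>) powr p * (\<phi> \<xi> * lu \<xi>) powr (2-p))
        \<le> K' powr e * (c1 * Mr powr e * I)"
      using R unfolding eqL eqR c1_def e_def by (simp add: mult_ac)
    then have "(\<Sum>\<xi>\<in>F. norm (FL M v f \<xi>) powr p * (\<phi> \<xi> * lu \<xi>) powr (2-p)) \<le> c1 * Mr powr e * I"
      using K'pos by simp
    then show ?thesis unfolding Mr_def I_def e_def .
  qed
  have HYF: "(\<Sum>\<xi>\<in>F. norm (FL M v f \<xi>) powr q * lv \<xi> powr (2 - q))
      \<le> c2 * (\<integral>x. norm (f x) powr p \<partial>M) powr (1/(p-1))"
    if p2: "p < 2" and f: "in_Lp M p f" and F: "finite F" for f F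
  proof -
    have fm: "f \<in> borel_measurable M" and fi: "integrable M (\<lambda>x. norm (f x) powr p)"
      using f by (auto simp: in_Lp_def)
    have "(\<Sum>\<xi>\<in>F. norm (FL M v f \<xi>) powr (p/(p-1)) * lv \<xi> powr (2 - p/(p-1)))
        \<le> (CP p * Bc powr (p-1) * (\<integral>x. norm (f x) powr p \<partial>M)) powr (1/(p-1))"
    proof (rule hy_core[OF F, where T = "FL M v" and M = M])
      show "\<And>\<xi>. \<xi> \<in> F \<Longrightarrow> lv \<xi> > 0" using lvpos by simp
      show "1 < p" "p < 2" using p p2 by auto
      show "Bc > 0" by (rule Bc)
      show "\<And>g h \<xi>. L1 M g \<Longrightarrow> L2 M h \<Longrightarrow> \<xi> \<in> F \<Longrightarrow> FL M v (\<lambda>x. g x + h x) \<xi> = FL M v g \<xi> + FL M v h \<xi>"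
        using Tadd by blast
      show "\<And>g \<xi>. L1 M g \<Longrightarrow> \<xi> \<in> F \<Longrightarrow> norm (FL M v g \<xi>) \<le> lv \<xi> * (\<integral>x. norm (g x) \<partial>M)"
        using T1 by blast
      show "\<And>h. L2 M h \<Longrightarrow> (\<Sum>\<xi>\<in>F. (norm (FL M v h \<xi>))^2) \<le> Bc * (\<integral>x. (norm (h x))^2 \<partial>M)"
        using T2 F by blast
    qed (use fm fi in auto)
    also have "\<dots> = c2 * (\<integral>x. norm (f x) powr p \<partial>M) powr (1/(p-1))"
      unfolding c2_def using CP_pos[OF p(1) p2] Bc by (simp add: powr_mult)
    finally show ?thesis unfolding q_def .
  qed
  define G where "G \<phi> f \<xi> = (cmod (FL M v f \<xi>) * \<phi> \<xi> powr (1/b - 1/q)) powr b * lu \<xi> powr (1 - b/q) * lv \<xi> powr (1 - b/p)"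
    for \<phi> :: "'i \<Rightarrow> real" and f \<xi>
  have c1pos: "c1 > 0" if "p < 2" unfolding c1_def using CP_pos[OF p(1) that] Bc K'pos by simp
  have c2pos: "c2 > 0" if "p < 2" unfolding c2_def using CP_pos[OF p(1) that] Bc by simp
  have main: "\<exists>Cc>0. \<forall>\<phi> f F. (\<forall>\<xi>. 0 < \<phi> \<xi>) \<longrightarrow> Mphi M u \<phi> < \<infinity> \<longrightarrow> in_Lp M p f \<longrightarrow> finite F \<longrightarrow>
     (\<Sum>\<xi>\<in>F. G \<phi> f \<xi>) \<le> Cc * enn2real (Mphi M u \<phi>) powr (1 - b/q) * (\<integral>x. norm (f x) powr p \<partial>M) powr (b/p)"
  proof (cases "p = 2")
    case True
    have q2: "q = 2" using True by (simp add: q_def)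
    have b2: "b = 2" using b True by simp
    show ?thesis
    proof (intro exI[of _ Bc] conjI Bc allI impI)
      fix \<phi> :: "'i \<Rightarrow> real" and f and F :: "'i set"
      assume \<phi>: "\<forall>\<xi>. 0 < \<phi> \<xi>" and fin: "Mphi M u \<phi> < \<infinity>" and f: "in_Lp M p f" and F: "finite F"
      have Mr: "enn2real (Mphi M u \<phi>) > 0" using Mrpos[OF _ fin] \<phi> by auto
      have fL2: "L2 M f" using f True by (simp add: in_Lp_2)
      have Geq: "G \<phi> f \<xi> = (norm (FL M v f \<xi>))^2" for \<xi>
        unfolding G_def q2 b2 True using \<phi> lupos[of \<xi>] lvpos[of \<xi>] by (simp add: less_imp_neq[symmetric])
      have "(\<Sum>\<xi>\<in>F. G \<phi> f \<xi>) \<le> Bc * (\<integral>x. (norm (f x))^2 \<partial>M)"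
        unfolding Geq using T2[OF fL2 F] .
      also have "(\<integral>x. (norm (f x))^2 \<partial>M) = (\<integral>x. norm (f x) powr p \<partial>M) powr (b/p)"
        using True b2 by simp
      finally show "(\<Sum>\<xi>\<in>F. G \<phi> f \<xi>) \<le> Bc * enn2real (Mphi M u \<phi>) powr (1 - b/q) * (\<integral>x. norm (f x) powr p \<partial>M) powr (b/p)"
        using Mr q2 b2 by simp
    qed
  next
    case False
    then have p2: "p < 2" using p by simp
    define t where "t = (q - b)/(q - p)"
    define Cc where "Cc = (if b = p then c1 else if b = q then c2 else c1 powr t * c2 powr (1-t))"
    have Ccpos: "Cc > 0" unfolding Cc_def using c1pos[OF p2] c2pos[OF p2] by auto
    show ?thesis
    proof (intro exI[of _ Cc] conjI Ccpos allI impI)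
      fix \<phi> :: "'i \<Rightarrow> real" and f and F :: "'i set"
      assume \<phi>': "\<forall>\<xi>. 0 < \<phi> \<xi>" and fin: "Mphi M u \<phi> < \<infinity>" and f: "in_Lp M p f" and F: "finite F"
      have \<phi>: "\<And>\<xi>. 0 < \<phi> \<xi>" using \<phi>' by auto
      define Mr where "Mr = enn2real (Mphi M u \<phi>)"
      have Mr: "Mr > 0" using Mrpos[OF \<phi> fin] by (simp add: Mr_def)
      define I where "I = (\<integral>x. norm (f x) powr p \<partial>M)"
      have I0: "I \<ge> 0" by (simp add: I_def)
      define gp where "gp \<xi> = norm (FL M v f \<xi>) powr p * (\<phi> \<xi> * lu \<xi>) powr (2-p)" for \<xi>
      define gq where "gq \<xi> = norm (FL M v f \<xi>) powr q * lv \<xi> powr (2 - q)" for \<xi>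
      have Sp: "(\<Sum>\<xi>\<in>F. gp \<xi>) \<le> c1 * Mr powr (2-p) * I"
        unfolding gp_def Mr_def I_def by (rule PaleyF[OF p2 \<phi> fin f F])
      have Sq: "(\<Sum>\<xi>\<in>F. gq \<xi>) \<le> c2 * I powr (1/(p-1))"
        unfolding gq_def I_def by (rule HYF[OF p2 f F])
      have qeq: "q = p/(p-1)" by (simp add: q_def)
      have bq: "b \<le> q" using b by (simp add: q_def)
      show "(\<Sum>\<xi>\<in>F. G \<phi> f \<xi>) \<le> Cc * enn2real (Mphi M u \<phi>) powr (1 - b/q) * (\<integral>x. norm (f x) powr p \<partial>M) powr (b/p)"
        unfolding Mr_def[symmetric] I_def[symmetric]
      proof (cases "b = p")
        case True
        have Geq: "G \<phi> f \<xi> = gp \<xi>" for \<xi>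
          unfolding G_def gp_def True qeq using term_bp[OF p(1) \<phi> lupos lvpos] by simp
        have e: "1 - p/q = 2 - p" using p by (simp add: q_def field_simps)
        show "(\<Sum>\<xi>\<in>F. G \<phi> f \<xi>) \<le> Cc * Mr powr (1 - b/q) * I powr (b/p)"
        proof -
          have CcE: "Cc = c1" using True by (simp add: Cc_def)
          show ?thesis unfolding Geq CcE True e using Sp I0 p by simp
        qed
      next
        case bnp: False
        show "(\<Sum>\<xi>\<in>F. G \<phi> f \<xi>) \<le> Cc * Mr powr (1 - b/q) * I powr (b/p)"
        proof (cases "b = q")
          case True
          have Geq: "G \<phi> f \<xi> = gq \<xi>" for \<xi>
            unfolding G_def gq_def True qeq using term_bq[OF p(1) \<phi> lupos lvpos] by simp
          have e: "q/p = 1/(p-1)" using p by (simp add: q_def field_simps)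
          have CcE: "Cc = c2" using True bnp by (simp add: Cc_def)
          have qn: "q \<noteq> 0" using p by (simp add: q_def)
          show ?thesis unfolding Geq CcE True e using Sq Mr qn by simp
        next
          case bnq: False
          have bpq: "p < b" "b < q" using b bnp bnq bq by auto
          note ex = exps[OF p(1) p2 bpq q_def t_def]
          have Geq: "G \<phi> f \<xi> = gp \<xi> powr t * gq \<xi> powr (1-t)" for \<xi>
            unfolding G_def gp_def gq_def t_def qeq
            using term_mid[OF p(1) p2 \<phi> lupos lvpos _ bpq[unfolded qeq]] by simp
          have "(\<Sum>\<xi>\<in>F. G \<phi> f \<xi>) \<le> (\<Sum>\<xi>\<in>F. gp \<xi>) powr t * (\<Sum>\<xi>\<in>F. gq \<xi>) powr (1-t)"
            unfolding Geq by (rule holder_sum[OF F ex(3) ex(4)]) (auto simp: gp_def gq_def)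
          also have "\<dots> \<le> (c1 * Mr powr (2-p) * I) powr t * (c2 * I powr (1/(p-1))) powr (1-t)"
            using Sp Sq ex(3) ex(4)
            by (intro mult_mono powr_mono2) (auto intro: sum_nonneg simp: gp_def gq_def)
          also have "\<dots> = (c1 powr t * c2 powr (1-t)) * Mr powr ((2-p)*t) * I powr (t + (1-t) * (1/(p-1)))"
            using p by (intro mid_alg c1pos[OF p2] c2pos[OF p2] Mr I0 ex(3) ex(4)) auto
          also have "\<dots> = Cc * Mr powr (1 - b/q) * I powr (b/p)"
            using ex(1) ex(2) bnp bnq by (simp add: Cc_def mult.commute)
          finally show ?thesis .
        qed
      qed
    qed
  qed
  then obtain Cc where Cc: "Cc > 0" and bound: "\<And>\<phi> f F. (\<forall>\<xi>. 0 < \<phi> \<xi>) \<Longrightarrow> Mphi M u \<phi> < \<infinity> \<Longrightarrow> in_Lp M p f \<Longrightarrow> finite F \<Longrightarrow>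
     (\<Sum>\<xi>\<in>F. G \<phi> f \<xi>) \<le> Cc * enn2real (Mphi M u \<phi>) powr (1 - b/q) * (\<integral>x. norm (f x) powr p \<partial>M) powr (b/p)"
    by blast
  have b0: "b > 0" using b p by simp
  show ?thesis
  proof (intro exI[of _ "Cc powr (1/b)"] conjI allI impI)
    show "Cc powr (1/b) > 0" using Cc by simp
    fix \<phi> :: "'i \<Rightarrow> real" and f
    assume \<phi>: "\<forall>\<xi>. 0 < \<phi> \<xi>" and fin: "Mphi M u \<phi> < \<infinity>" and f: "in_Lp M p f"
    have Mr: "enn2real (Mphi M u \<phi>) > 0" using Mrpos[OF _ fin] \<phi> by auto
    have fs: "G \<phi> f summable_on UNIV \<and> (\<Sum>\<^sub>\<infinity>\<xi>. G \<phi> f \<xi>) powr (1/b)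
        \<le> Cc powr (1/b) * enn2real (Mphi M u \<phi>) powr (1/b - 1/q) * (\<integral>x. norm (f x) powr p \<partial>M) powr (1/p)"
    proof (rule final_step[OF _ Cc Mr _ b0])
      show "\<And>\<xi>. G \<phi> f \<xi> \<ge> 0" by (simp add: G_def)
      show "(\<integral>x. norm (f x) powr p \<partial>M) \<ge> 0" by simp
      show "\<And>F. finite F \<Longrightarrow> (\<Sum>\<xi>\<in>F. G \<phi> f \<xi>) \<le> Cc * enn2real (Mphi M u \<phi>) powr (1 - b/q) * (\<integral>x. norm (f x) powr p \<partial>M) powr (b/p)"
        using bound[OF \<phi> fin f] by blast
    qed
    have Gdef: "G \<phi> f = (\<lambda>\<xi>. (cmod (FL M v f \<xi>) * \<phi> \<xi> powr (1 / b - 1 / (p / (p - 1)))) powr b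
                       * Linf_norm M (u \<xi>) powr (1 - b / (p / (p - 1)))
                       * Linf_norm M (v \<xi>) powr (1 - b / p))"
      by (rule ext) (simp only: G_def lu_def lv_def q_def)
    show "let q = p / (p - 1);
             g = (\<lambda>\<xi>. (cmod (FL M v f \<xi>) * \<phi> \<xi> powr (1 / b - 1 / q)) powr b
                       * Linf_norm M (u \<xi>) powr (1 - b / q)
                       * Linf_norm M (v \<xi>) powr (1 - b / p))
         in g summable_on UNIV \<and>
            (\<Sum>\<^sub>\<infinity>\<xi>. g \<xi>) powr (1 / b)
              \<le> Cc powr (1/b) * enn2real (Mphi M u \<phi>) powr (1 / b - 1 / q) * Lp_norm M p f"
      using fs unfolding Let_def Gdef[symmetric] Lp_norm_def q_def by simp
  qed
qed


end
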